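(* Let $(b,c)$ be a connected canonically compactifiable weighted graph over $X$ and let $m:X\to(0,\infty)$ satisfy $m(X)<\infty$. Let $Q^{(D)}$ be the form with Dirichlet boundary conditions and $L^{(D)}$ the associated operator. Then $$D(Q^{(D)})=\{u\in\widetilde D:\hat u|_{\partial X}=0\}=\widetilde D_o,$$ and $$D(L^{(D)})=\{f\in\widetilde D:\ \hat f|_{\partial X}=0\ \text{ and }\ \widetilde Lf\in\ell^2(X,m)\},$$ where $L^{(D)}f=\widetilde Lf$ for $f\in D(L^{(D)})$.
   Context: Let $X$ be a countably infinite set. A weighted graph $(b,c)$ over $X$ consists of a symmetric $b:X\times X\to[0,\infty)$ with $b(x,x)=0$ and $\sum_{y}b(x,y)<\infty$ for all $x$, and $c:X\to[0,\infty)$; connected means any two distinct vertices are joined by a finite path of pairwise distinct vertices with consecutive ones satisfying $b>0$. Let $\widetilde Q(f)=\frac12\sum_{x,y}b(x,y)|f(x)-f(y)|^2+\sum_x c(x)|f(x)|^2$ and $\widetilde D=\{f:\widetilde Q(f)<\infty\}$; the graph is canonically compactifiable if $\widetilde D\subseteq\ell^\infty(X)$. For $f\in\widetilde D$, $\widetilde Lf(x)=\frac1{m(x)}\big(\sum_y b(x,y)(f(x)-f(y))+c(x)f(x)\big)$. On $\ell^2(X,m)$ (inner product $\sum_x\overline{u(x)}v(x)m(x)$, norm $\|\cdot\|$), $Q^{(D)}$ is the restriction of $\widetilde Q$ to the closure of the finitely supported functions $C_c(X)$ with respect to $\|u\|_{\widetilde Q}=(\widetilde Q(u)+\|u\|^2)^{1/2}$;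 $L^{(D)}$ is the associated selfadjoint operator. For fixed $o\in X$, $\widetilde D_o$ is the closure of $C_c(X)$ in $\widetilde D$ w.r.t. $\|f\|_o=(\widetilde Q(f)+|f(o)|^2)^{1/2}$. Let $\mathcal A$ be the sup-norm closure of $\widetilde D$ in $\ell^\infty(X)$, $\mathcal A^+$ the smallest $C^*$-subalgebra of $\ell^\infty(X)$ containing $\mathcal A$ and $1$, $K$ its set of characters (nonzero multiplicative linear functionals) with the weak-$*$ topology, $\hat g(\gamma)=\gamma(g)$; via $x\mapsto\delta_x$ ($\delta_x(f)=f(x)$) view $X\subseteq K$ and let $\partial X=K\setminus X$. *)

theory Defs
  imports "HOL-Analysis.Analysis" "HOL-Library.Countable"
begin

definition weighted_graph :: "('x \<Rightarrow> 'x \<Rightarrow> real) \<Rightarrow> ('x \<Rightarrow> real) \<Rightarrow> bool" where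
  "weighted_graph b c \<longleftrightarrow>
     (\<forall>x y. b x y = b y x) \<and> (\<forall>x y. 0 \<le> b x y) \<and> (\<forall>x. b x x = 0) \<and>
     (\<forall>x. (\<lambda>y. b x y) summable_on UNIV) \<and> (\<forall>x. 0 \<le> c x)"

definition connected_graph :: "('x \<Rightarrow> 'x \<Rightarrow> real) \<Rightarrow> bool" where
  "connected_graph b \<longleftrightarrow>
     (\<forall>x y. x \<noteq> y \<longrightarrow> (\<exists>xs. xs \<noteq> [] \<and> hd xs = x \<and> last xs = y \<and> distinct xs \<and>
        (\<forall>i. Suc i < length xs \<longrightarrow> 0 < b (xs ! i) (xs ! Suc i))))"

definition Qt_finite :: "('x \<Rightarrow> 'x \<Rightarrow> real) \<Rightarrow> ('x \<Rightarrow> real) \<Rightarrow> ('x \<Rightarrow> complex) \<Rightarrow> bool" where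
  "Qt_finite b c f \<longleftrightarrow>
     (\<lambda>(x,y). b x y * (cmod (f x - f y))\<^sup>2) summable_on UNIV \<and>
     (\<lambda>x. c x * (cmod (f x))\<^sup>2) summable_on UNIV"

definition Qt :: "('x \<Rightarrow> 'x \<Rightarrow> real) \<Rightarrow> ('x \<Rightarrow> real) \<Rightarrow> ('x \<Rightarrow> complex) \<Rightarrow> real" where
  "Qt b c f = (1/2) * (\<Sum>\<^sub>\<infinity>(x,y). b x y * (cmod (f x - f y))\<^sup>2)
              + (\<Sum>\<^sub>\<infinity>x. c x * (cmod (f x))\<^sup>2)"

definition Dt :: "('x \<Rightarrow> 'x \<Rightarrow> real) \<Rightarrow> ('x \<Rightarrow> real) \<Rightarrow> ('x \<Rightarrow> complex) set" where
  "Dt b c = {f. Qt_finite b c f}"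

definition linf :: "('x \<Rightarrow> complex) set" where
  "linf = {f. bounded (range f)}"

definition canonically_compactifiable :: "('x \<Rightarrow> 'x \<Rightarrow> real) \<Rightarrow> ('x \<Rightarrow> real) \<Rightarrow> bool" where
  "canonically_compactifiable b c \<longleftrightarrow> Dt b c \<subseteq> linf"

definition Lt :: "('x \<Rightarrow> 'x \<Rightarrow> real) \<Rightarrow> ('x \<Rightarrow> real) \<Rightarrow> ('x \<Rightarrow> real) \<Rightarrow> ('x \<Rightarrow> complex) \<Rightarrow> ('x \<Rightarrow> complex)" where
  "Lt b c m f = (\<lambda>x. complex_of_real (1 / m x) *
      ((\<Sum>\<^sub>\<infinity>y. complex_of_real (b x y) * (f x - f y)) + complex_of_real (c x) * f x))"

definition ell2 :: "('x \<Rightarrow> real) \<Rightarrow> ('x \<Rightarrow> complex) set" where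
  "ell2 m = {f. (\<lambda>x. m x * (cmod (f x))\<^sup>2) summable_on UNIV}"

definition l2norm_sq :: "('x \<Rightarrow> real) \<Rightarrow> ('x \<Rightarrow> complex) \<Rightarrow> real" where
  "l2norm_sq m f = (\<Sum>\<^sub>\<infinity>x. m x * (cmod (f x))\<^sup>2)"

definition inner_m :: "('x \<Rightarrow> real) \<Rightarrow> ('x \<Rightarrow> complex) \<Rightarrow> ('x \<Rightarrow> complex) \<Rightarrow> complex" where
  "inner_m m u v = (\<Sum>\<^sub>\<infinity>x. cnj (u x) * v x * complex_of_real (m x))"

definition Cc :: "('x \<Rightarrow> complex) set" where
  "Cc = {\<phi>. finite {x. \<phi> x \<noteq> 0}}"

definition Qform :: "('x \<Rightarrow> 'x \<Rightarrow> real) \<Rightarrow> ('x \<Rightarrow> real) \<Rightarrow> ('x \<Rightarrow> complex) \<Rightarrow> ('x \<Rightarrow> complex) \<Rightarrow> complex" where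
  "Qform b c u v = (1/2) * (\<Sum>\<^sub>\<infinity>(x,y). complex_of_real (b x y) * cnj (u x - u y) * (v x - v y))
                 + (\<Sum>\<^sub>\<infinity>x. complex_of_real (c x) * cnj (u x) * v x)"

text \<open>D(Q^(D)): closure of C_c(X) w.r.t. the form norm (Qt(u) + ||u||^2)^(1/2).\<close>
definition DQD :: "('x \<Rightarrow> 'x \<Rightarrow> real) \<Rightarrow> ('x \<Rightarrow> real) \<Rightarrow> ('x \<Rightarrow> real) \<Rightarrow> ('x \<Rightarrow> complex) set" where
  "DQD b c m = {u. u \<in> Dt b c \<and> u \<in> ell2 m \<and>
      (\<forall>\<epsilon>>0. \<exists>\<phi>\<in>Cc. Qt b c (u - \<phi>) + l2norm_sq m (u - \<phi>) < \<epsilon>)}"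

text \<open>The selfadjoint operator L^(D) associated with Q^(D):
  u in D(L^(D)) with L^(D) u = w iff u in D(Q^(D)), w in l^2 and Q(u,v) = <w,v> for all v in D(Q^(D)).\<close>
definition LD_rel :: "('x \<Rightarrow> 'x \<Rightarrow> real) \<Rightarrow> ('x \<Rightarrow> real) \<Rightarrow> ('x \<Rightarrow> real) \<Rightarrow> ('x \<Rightarrow> complex) \<Rightarrow> ('x \<Rightarrow> complex) \<Rightarrow> bool" where
  "LD_rel b c m u w \<longleftrightarrow> u \<in> DQD b c m \<and> w \<in> ell2 m \<and>
      (\<forall>v\<in>DQD b c m. Qform b c u v = inner_m m w v)"

definition DLD :: "('x \<Rightarrow> 'x \<Rightarrow> real) \<Rightarrow> ('x \<Rightarrow> real) \<Rightarrow> ('x \<Rightarrow> real) \<Rightarrow> ('x \<Rightarrow> complex) set" where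
  "DLD b c m = {u. \<exists>w. LD_rel b c m u w}"

definition LD :: "('x \<Rightarrow> 'x \<Rightarrow> real) \<Rightarrow> ('x \<Rightarrow> real) \<Rightarrow> ('x \<Rightarrow> real) \<Rightarrow> ('x \<Rightarrow> complex) \<Rightarrow> ('x \<Rightarrow> complex)" where
  "LD b c m u = (THE w. LD_rel b c m u w)"

text \<open>Dt_o: closure of C_c(X) in Dt w.r.t. ||f||_o = (Qt(f) + |f(o)|^2)^(1/2).\<close>
definition Dt_o :: "('x \<Rightarrow> 'x \<Rightarrow> real) \<Rightarrow> ('x \<Rightarrow> real) \<Rightarrow> 'x \<Rightarrow> ('x \<Rightarrow> complex) set" where
  "Dt_o b c x0 = {u. u \<in> Dt b c \<and>
      (\<forall>\<epsilon>>0. \<exists>\<phi>\<in>Cc. Qt b c (u - \<phi>) + (cmod (u x0 - \<phi> x0))\<^sup>2 < \<epsilon>)}"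

definition Aalg :: "('x \<Rightarrow> 'x \<Rightarrow> real) \<Rightarrow> ('x \<Rightarrow> real) \<Rightarrow> ('x \<Rightarrow> complex) set" where
  "Aalg b c = {g. g \<in> linf \<and>
      (\<forall>\<epsilon>>0. \<exists>f\<in>Dt b c \<inter> linf. \<forall>x. cmod (g x - f x) \<le> \<epsilon>)}"

definition cstar_subalgebra :: "('x \<Rightarrow> complex) set \<Rightarrow> bool" where
  "cstar_subalgebra S \<longleftrightarrow> S \<subseteq> linf \<and> (\<lambda>_. 0) \<in> S \<and>
     (\<forall>f\<in>S. \<forall>g\<in>S. (\<lambda>x. f x + g x) \<in> S \<and> (\<lambda>x. f x * g x) \<in> S) \<and>
     (\<forall>a. \<forall>f\<in>S. (\<lambda>x. a * f x) \<in> S) \<and>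
     (\<forall>f\<in>S. (\<lambda>x. cnj (f x)) \<in> S) \<and>
     (\<forall>g\<in>linf. (\<forall>\<epsilon>>0. \<exists>f\<in>S. \<forall>x. cmod (g x - f x) \<le> \<epsilon>) \<longrightarrow> g \<in> S)"

definition Aplus :: "('x \<Rightarrow> 'x \<Rightarrow> real) \<Rightarrow> ('x \<Rightarrow> real) \<Rightarrow> ('x \<Rightarrow> complex) set" where
  "Aplus b c = \<Inter>{S. cstar_subalgebra S \<and> Aalg b c \<subseteq> S \<and> (\<lambda>_. 1) \<in> S}"

text \<open>Characters of A^+ (nonzero multiplicative linear functionals), represented as
  functions on all of 'x => complex that vanish outside A^+ (so each character has a
  unique representative).\<close>
definition characters :: "('x \<Rightarrow> 'x \<Rightarrow> real) \<Rightarrow> ('x \<Rightarrow> real) \<Rightarrow> (('x \<Rightarrow> complex) \<Rightarrow> complex) set" where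
  "characters b c = {\<gamma>.
      (\<forall>f\<in>Aplus b c. \<forall>g\<in>Aplus b c. \<gamma> (\<lambda>x. f x + g x) = \<gamma> f + \<gamma> g \<and>
                                   \<gamma> (\<lambda>x. f x * g x) = \<gamma> f * \<gamma> g) \<and>
      (\<forall>a. \<forall>f\<in>Aplus b c. \<gamma> (\<lambda>x. a * f x) = a * \<gamma> f) \<and>
      (\<exists>f\<in>Aplus b c. \<gamma> f \<noteq> 0) \<and>
      (\<forall>f. f \<notin> Aplus b c \<longrightarrow> \<gamma> f = 0)}"

definition point_char :: "('x \<Rightarrow> 'x \<Rightarrow> real) \<Rightarrow> ('x \<Rightarrow> real) \<Rightarrow> 'x \<Rightarrow> (('x \<Rightarrow> complex) \<Rightarrow> complex)" where
  "point_char b c x = (\<lambda>f. if f \<in> Aplus b c then f x else 0)"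

text \<open>The boundary \<partial>X = K \ X.\<close>
definition boundary :: "('x \<Rightarrow> 'x \<Rightarrow> real) \<Rightarrow> ('x \<Rightarrow> real) \<Rightarrow> (('x \<Rightarrow> complex) \<Rightarrow> complex) set" where
  "boundary b c = characters b c - range (point_char b c)"

definition gelfand_hat :: "('x \<Rightarrow> complex) \<Rightarrow> (('x \<Rightarrow> complex) \<Rightarrow> complex) \<Rightarrow> complex" where
  "gelfand_hat u \<gamma> = \<gamma> u"

end

theory Submission
  imports Defs
begin

definition Sq :: "('i \<Rightarrow> real) \<Rightarrow> ('i \<Rightarrow> complex) \<Rightarrow> 'i \<Rightarrow> real" where
  "Sq w a i = w i * (cmod (a i))\<^sup>2"

lemma sq_add_le: "(cmod (p + q))\<^sup>2 \<le> 2 * (cmod p)\<^sup>2 + 2 * (cmod q)\<^sup>2"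
proof -
  have "cmod (p+q) \<le> cmod p + cmod q" by (rule norm_triangle_ineq)
  hence "(cmod (p+q))\<^sup>2 \<le> (cmod p + cmod q)\<^sup>2" by (simp add: power_mono)
  also have "\<dots> \<le> 2 * (cmod p)\<^sup>2 + 2 * (cmod q)\<^sup>2"
  proof -
    have "0 \<le> (cmod p - cmod q)\<^sup>2" by simp
    thus ?thesis by (simp add: power2_eq_square algebra_simps)
  qed
  finally show ?thesis .
qed

lemma Sq_nonneg: "(\<And>i. 0 \<le> w i) \<Longrightarrow> 0 \<le> Sq w a i"
  by (simp add: Sq_def)

lemma gen_dom:
  assumes w: "\<And>i. 0 \<le> w i" and s: "Sq w a summable_on A"
    and le: "\<And>i. i \<in> A \<Longrightarrow> cmod (a' i) \<le> cmod (a i)"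
  shows "Sq w a' summable_on A" "infsum (Sq w a') A \<le> infsum (Sq w a) A"
proof -
  have pt: "Sq w a' i \<le> Sq w a i" if "i \<in> A" for i
    unfolding Sq_def using le[OF that] w[of i]
    by (simp add: mult_left_mono power_mono)
  show "Sq w a' summable_on A"
    by (rule summable_on_comparison_test[OF s]) (auto simp: pt Sq_nonneg w)
  thus "infsum (Sq w a') A \<le> infsum (Sq w a) A"
    using s pt by (intro infsum_mono) auto
qed

lemma gen_add:
  assumes w: "\<And>i. 0 \<le> w i" and s1: "Sq w a summable_on A" and s2: "Sq w a' summable_on A"
  shows "Sq w (\<lambda>i. a i + a' i) summable_on A"
    "infsum (Sq w (\<lambda>i. a i + a' i)) A \<le> 2 * infsum (Sq w a) A + 2 * infsum (Sq w a') A"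
proof -
  have pt: "Sq w (\<lambda>i. a i + a' i) i \<le> 2 * Sq w a i + 2 * Sq w a' i" for i
  proof -
    have "w i * (cmod (a i + a' i))\<^sup>2 \<le> w i * (2 * (cmod (a i))\<^sup>2 + 2 * (cmod (a' i))\<^sup>2)"
      using w[of i] sq_add_le by (intro mult_left_mono) auto
    thus ?thesis by (simp add: Sq_def algebra_simps)
  qed
  have s3: "(\<lambda>i. 2 * Sq w a i + 2 * Sq w a' i) summable_on A"
    using s1 s2 by (intro summable_on_add summable_on_cmult_right)
  show s4: "Sq w (\<lambda>i. a i + a' i) summable_on A"
    by (rule summable_on_comparison_test[OF s3]) (auto simp: pt Sq_nonneg w)
  have "infsum (Sq w (\<lambda>i. a i + a' i)) A \<le> infsum (\<lambda>i. 2 * Sq w a i + 2 * Sq w a' i) A"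
    using s3 s4 pt by (intro infsum_mono) auto
  also have "\<dots> = 2 * infsum (Sq w a) A + 2 * infsum (Sq w a') A"
    using s1 s2 by (simp add: infsum_add summable_on_cmult_right infsum_cmult_right)
  finally show "infsum (Sq w (\<lambda>i. a i + a' i)) A \<le> 2 * infsum (Sq w a) A + 2 * infsum (Sq w a') A" .
qed

lemma gen_scale:
  assumes s: "Sq w a summable_on A"
  shows "Sq w (\<lambda>i. k * a i) summable_on A"
    "infsum (Sq w (\<lambda>i. k * a i)) A = (cmod k)\<^sup>2 * infsum (Sq w a) A"
proof -
  have e: "Sq w (\<lambda>i. k * a i) = (\<lambda>i. (cmod k)\<^sup>2 * Sq w a i)"
    by (auto simp: Sq_def fun_eq_iff norm_mult power_mult_distrib)
  show "Sq w (\<lambda>i. k * a i) summable_on A" unfolding e using s by (rule summable_on_cmult_right)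
  show "infsum (Sq w (\<lambda>i. k * a i)) A = (cmod k)\<^sup>2 * infsum (Sq w a) A"
    unfolding e by (rule infsum_cmult_right') 
qed

locale wgraph =
  fixes b :: "'x \<Rightarrow> 'x \<Rightarrow> real" and c :: "'x \<Rightarrow> real"
  assumes wg: "weighted_graph b c"
begin

lemma b_sym: "b x y = b y x" and b_nn: "0 \<le> b x y" and b_diag: "b x x = 0"
  and b_sum: "b x summable_on UNIV" and c_nn: "0 \<le> c x"
  using wg unfolding weighted_graph_def by auto

definition bw :: "'x \<times> 'x \<Rightarrow> real" where "bw = (\<lambda>(x,y). b x y)"
definition df :: "('x \<Rightarrow> complex) \<Rightarrow> 'x \<times> 'x \<Rightarrow> complex" where "df f = (\<lambda>(x,y). f x - f y)"

lemma bw_nn: "0 \<le> bw i" by (auto simp: bw_def b_nn split: prod.splits)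

lemma E_eq: "(\<lambda>(x,y). b x y * (cmod (f x - f y))\<^sup>2) = Sq bw (df f)"
  by (auto simp: fun_eq_iff Sq_def bw_def df_def)
lemma V_eq: "(\<lambda>x. c x * (cmod (f x))\<^sup>2) = Sq c f"
  by (auto simp: fun_eq_iff Sq_def)

lemma Dt_iff: "f \<in> Dt b c \<longleftrightarrow> Sq bw (df f) summable_on UNIV \<and> Sq c f summable_on UNIV"
  by (simp add: Dt_def Qt_finite_def E_eq V_eq)

lemma Qt_eq: "Qt b c f = (1/2) * infsum (Sq bw (df f)) UNIV + infsum (Sq c f) UNIV"
  by (simp add: Qt_def E_eq[symmetric] V_eq[symmetric])

lemma Qt_nonneg: "0 \<le> Qt b c f"
  unfolding Qt_eq by (intro add_nonneg_nonneg mult_nonneg_nonneg infsum_nonneg)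
     (auto intro: Sq_nonneg bw_nn c_nn)

lemma Dt_add:
  assumes "f \<in> Dt b c" "g \<in> Dt b c"
  shows "(\<lambda>x. f x + g x) \<in> Dt b c" "Qt b c (\<lambda>x. f x + g x) \<le> 2 * Qt b c f + 2 * Qt b c g"
proof -
  have d: "df (\<lambda>x. f x + g x) = (\<lambda>i. df f i + df g i)" by (auto simp: df_def fun_eq_iff)
  note A = gen_add[of bw "df f" UNIV "df g", OF bw_nn] gen_add[of c f UNIV g, OF c_nn]
  show "(\<lambda>x. f x + g x) \<in> Dt b c" using assms A unfolding Dt_iff d by auto
  show "Qt b c (\<lambda>x. f x + g x) \<le> 2 * Qt b c f + 2 * Qt b c g"
    using assms A unfolding Dt_iff Qt_eq d by auto
qed

lemma Dt_scale:
  assumes "f \<in> Dt b c"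
  shows "(\<lambda>x. k * f x) \<in> Dt b c" "Qt b c (\<lambda>x. k * f x) = (cmod k)\<^sup>2 * Qt b c f"
proof -
  have d: "df (\<lambda>x. k * f x) = (\<lambda>i. k * df f i)" by (auto simp: df_def fun_eq_iff algebra_simps)
  note A = gen_scale[of bw "df f" UNIV k] gen_scale[of c f UNIV k]
  show "(\<lambda>x. k * f x) \<in> Dt b c" using assms A unfolding Dt_iff d by auto
  show "Qt b c (\<lambda>x. k * f x) = (cmod k)\<^sup>2 * Qt b c f"
    using assms A unfolding Dt_iff Qt_eq d by (auto simp: algebra_simps)
qed

lemma Dt_diff:
  assumes "f \<in> Dt b c" "g \<in> Dt b c"
  shows "(\<lambda>x. f x - g x) \<in> Dt b c" "Qt b c (\<lambda>x. f x - g x) \<le> 2 * Qt b c f + 2 * Qt b c g"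
proof -
  have e: "(\<lambda>x. f x - g x) = (\<lambda>x. f x + (\<lambda>x. (-1) * g x) x)" by auto
  show "(\<lambda>x. f x - g x) \<in> Dt b c" unfolding e
    by (rule Dt_add(1)[OF assms(1) Dt_scale(1)[OF assms(2), of "-1"]])
  show "Qt b c (\<lambda>x. f x - g x) \<le> 2 * Qt b c f + 2 * Qt b c g"
    unfolding e using assms Dt_add(2)[OF assms(1) Dt_scale(1)[OF assms(2), of "-1"]]
      Dt_scale(2)[OF assms(2), of "-1"] by simp
qed

lemma Dt_contract:
  assumes "f \<in> Dt b c" "\<And>x y. cmod (g x - g y) \<le> cmod (f x - f y)" "\<And>x. cmod (g x) \<le> cmod (f x)"
  shows "g \<in> Dt b c" "Qt b c g \<le> Qt b c f"
proof -
  have le: "cmod (df g i) \<le> cmod (df f i)" for i using assms(2) by (auto simp: df_def split: prod.splits)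
  note A = gen_dom[of bw "df f" UNIV "df g", OF bw_nn] gen_dom[of c f UNIV g, OF c_nn]
  show "g \<in> Dt b c" using assms A le unfolding Dt_iff by auto
  show "Qt b c g \<le> Qt b c f"
    using assms A le unfolding Dt_iff Qt_eq by (auto intro!: add_mono)
qed

lemma edge_le:
  assumes "f \<in> Dt b c"
  shows "b x y * (cmod (f x - f y))\<^sup>2 \<le> 2 * Qt b c f"
proof -
  have s: "Sq bw (df f) summable_on UNIV" "Sq c f summable_on UNIV" using assms Dt_iff by auto
  have "Sq bw (df f) (x,y) \<le> infsum (Sq bw (df f)) UNIV"
    using finite_sum_le_infsum[OF s(1), of "{(x,y)}"] by (simp add: Sq_nonneg bw_nn)
  moreover have "0 \<le> infsum (Sq c f) UNIV" by (intro infsum_nonneg Sq_nonneg c_nn)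
  ultimately show ?thesis by (simp add: Qt_eq Sq_def bw_def df_def)
qed

lemma vertex_le:
  assumes "f \<in> Dt b c"
  shows "c x * (cmod (f x))\<^sup>2 \<le> Qt b c f"
proof -
  have s: "Sq bw (df f) summable_on UNIV" "Sq c f summable_on UNIV" using assms Dt_iff by auto
  have "Sq c f x \<le> infsum (Sq c f) UNIV"
    using finite_sum_le_infsum[OF s(2), of "{x}"] by (simp add: Sq_nonneg c_nn)
  moreover have "0 \<le> infsum (Sq bw (df f)) UNIV" by (intro infsum_nonneg Sq_nonneg bw_nn)
  ultimately show ?thesis by (simp add: Qt_eq Sq_def)
qed

definition delta :: "'x \<Rightarrow> 'x \<Rightarrow> complex" where "delta z = (\<lambda>y. if y = z then 1 else 0)"

lemma delta_Dt: "delta z \<in> Dt b c"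
proof -
  define g1 where "g1 = (\<lambda>(x,y). if x = z then b x y else 0)"
  define g2 where "g2 = (\<lambda>(x,y). if y = z then b x y else 0)"
  have s1: "g1 summable_on UNIV \<times> UNIV"
  proof (rule summable_on_SigmaI[where g = "\<lambda>x. if x = z then infsum (b z) UNIV else 0"])
    show "((\<lambda>y. g1 (x, y)) has_sum (if x = z then infsum (b z) UNIV else 0)) UNIV" for x
    proof (cases "x = z")
      case True
      then have "(\<lambda>y. g1 (x, y)) = b z" by (simp add: g1_def fun_eq_iff)
      then show ?thesis using True b_sum[of z] by simp
    next
      case False
      then have "(\<lambda>y. g1 (x, y)) = (\<lambda>_. 0)" by (simp add: g1_def fun_eq_iff)
      then show ?thesis using False by simp
    qed
    have "finite {x \<in> UNIV. (if x = z then infsum (b z) UNIV else 0) \<noteq> 0}"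
      by (rule finite_subset[of _ "{z}"]) auto
    then show "(\<lambda>x. if x = z then infsum (b z) UNIV else 0) summable_on UNIV"
      by (rule finite_nonzero_values_imp_summable_on)
    show "0 \<le> g1 (x, y)" for x y by (simp add: g1_def b_nn)
  qed
  have s2: "g2 summable_on UNIV \<times> UNIV"
  proof (rule summable_on_SigmaI[where g = "\<lambda>x. b z x"])
    show "((\<lambda>y. g2 (x, y)) has_sum (b z x)) UNIV" for x
      by (rule has_sum_finite_neutralI[where B="{z}"]) (auto simp: g2_def b_sym)
    show "b z summable_on UNIV" by (rule b_sum)
    show "0 \<le> g2 (x, y)" for x y by (simp add: g2_def b_nn)
  qed
  have s12: "(\<lambda>i. g1 i + g2 i) summable_on UNIV" using s1 s2 by (intro summable_on_add) auto
  have "Sq bw (df (delta z)) summable_on UNIV"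
  proof (rule summable_on_comparison_test[OF s12])
    fix i :: "'x \<times> 'x"
    obtain x y where i: "i = (x,y)" by (cases i)
    show "Sq bw (df (delta z)) i \<le> g1 i + g2 i"
      unfolding i by (cases "x = z"; cases "y = z") (simp_all add: Sq_def bw_def df_def delta_def g1_def g2_def b_nn)
    show "0 \<le> Sq bw (df (delta z)) i" by (rule Sq_nonneg[OF bw_nn])
  qed
  moreover have "Sq c (delta z) summable_on UNIV"
  proof (rule finite_nonzero_values_imp_summable_on)
    show "finite {x \<in> UNIV. Sq c (delta z) x \<noteq> 0}"
      by (rule finite_subset[of _ "{z}"]) (auto simp: Sq_def delta_def)
  qed
  ultimately show ?thesis by (simp add: Dt_iff)
qed

lemma zero_Dt: "(\<lambda>x. 0) \<in> Dt b c"
  using Dt_scale(1)[OF delta_Dt, of 0] by simp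

lemma Cc_decomp:
  assumes "finite F" "{x. \<phi> x \<noteq> 0} \<subseteq> F"
  shows "\<phi> = (\<lambda>y. \<Sum>z\<in>F. \<phi> z * delta z y)"
proof
  fix y
  have "(\<Sum>z\<in>F. \<phi> z * delta z y) = (\<Sum>z\<in>F. if y = z then \<phi> z else 0)"
    by (rule sum.cong) (auto simp: delta_def)
  also have "\<dots> = (if y \<in> F then \<phi> y else 0)" using assms(1) by (simp add: sum.delta')
  also have "\<dots> = \<phi> y" using assms(2) by auto
  finally show "\<phi> y = (\<Sum>z\<in>F. \<phi> z * delta z y)" by simp
qed

lemma sum_delta_Dt: "finite F \<Longrightarrow> (\<lambda>y. \<Sum>z\<in>F. k z * delta z y) \<in> Dt b c"
proof (induction F rule: finite_induct)
  case empty then show ?case using zero_Dt by simp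
next
  case (insert a F)
  have "(\<lambda>y. (\<lambda>y. k a * delta a y) y + (\<lambda>y. \<Sum>z\<in>F. k z * delta z y) y) \<in> Dt b c"
    by (rule Dt_add(1)[OF Dt_scale(1)[OF delta_Dt] insert(3)])
  thus ?case using insert by simp
qed

lemma Cc_Dt:
  assumes "\<phi> \<in> Cc" shows "\<phi> \<in> Dt b c"
proof -
  have fin: "finite {x. \<phi> x \<noteq> 0}" using assms by (simp add: Cc_def)
  have eq: "\<phi> = (\<lambda>y. \<Sum>z\<in>{x. \<phi> x \<noteq> 0}. \<phi> z * delta z y)"
    by (rule Cc_decomp[OF fin subset_refl])
  have "(\<lambda>y. \<Sum>z\<in>{x. \<phi> x \<noteq> 0}. \<phi> z * delta z y) \<in> Dt b c" by (rule sum_delta_Dt[OF fin])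
  thus ?thesis unfolding eq[symmetric] .
qed

end


lemma geom_half_sum: "(\<Sum>n<N. (1/2::real)^n) = 2 - 2 * (1/2)^N"
  by (induction N) (auto simp: field_simps)

lemma geom_half_le: "(\<Sum>n<N. (1/2::real)^n) \<le> 2"
  unfolding geom_half_sum by simp

lemma cs_geom:
  fixes d :: "nat \<Rightarrow> real"
  shows "(\<Sum>n<N. d n)\<^sup>2 \<le> 2 * (\<Sum>n<N. 2^n * (d n)\<^sup>2)"
proof -
  have one: "sqrt ((1/2::real)^n) * sqrt (2^n) = 1" for n :: nat
    by (simp add: real_sqrt_mult[symmetric] power_mult_distrib[symmetric])
  have e: "(\<Sum>n<N. d n) = (\<Sum>n<N. sqrt ((1/2)^n) * (sqrt (2^n) * d n))"
    by (rule sum.cong) (auto simp: mult.assoc[symmetric] one)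
  have "(\<Sum>n<N. d n)\<^sup>2 \<le> (\<Sum>n<N. (sqrt ((1/2)^n))\<^sup>2) * (\<Sum>n<N. (sqrt (2^n) * d n)\<^sup>2)"
    unfolding e by (rule Cauchy_Schwarz_ineq_sum)
  also have "\<dots> = (\<Sum>n<N. (1/2)^n) * (\<Sum>n<N. 2^n * (d n)\<^sup>2)"
    by (simp add: power_mult_distrib)
  also have "\<dots> \<le> 2 * (\<Sum>n<N. 2^n * (d n)\<^sup>2)"
    by (intro mult_right_mono geom_half_le sum_nonneg) auto
  finally show ?thesis .
qed

lemma weighted_cs_sum:
  fixes w :: "'i \<Rightarrow> real" and d :: "nat \<Rightarrow> 'i \<Rightarrow> real"
  assumes w: "\<And>i. 0 \<le> w i" and F: "finite F"
    and A: "\<And>i. i \<in> F \<Longrightarrow> (A i)\<^sup>2 \<le> (\<Sum>n<N. d n i)\<^sup>2"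
    and B: "\<And>n. (\<Sum>i\<in>F. w i * (d n i)\<^sup>2) \<le> B n"
  shows "(\<Sum>i\<in>F. w i * (A i)\<^sup>2) \<le> 2 * (\<Sum>n<N. 2^n * B n)"
proof -
  have "(\<Sum>i\<in>F. w i * (A i)\<^sup>2) \<le> (\<Sum>i\<in>F. w i * (2 * (\<Sum>n<N. 2^n * (d n i)\<^sup>2)))"
  proof (intro sum_mono mult_left_mono w)
    fix i assume "i \<in> F"
    then show "(A i)\<^sup>2 \<le> 2 * (\<Sum>n<N. 2^n * (d n i)\<^sup>2)"
      using A cs_geom[of "\<lambda>n. d n i" N] by (meson order_trans)
  qed
  also have "\<dots> = 2 * (\<Sum>i\<in>F. \<Sum>n<N. 2^n * (w i * (d n i)\<^sup>2))"
    by (simp add: sum_distrib_left sum_distrib_right algebra_simps)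
  also have "\<dots> = 2 * (\<Sum>n<N. 2^n * (\<Sum>i\<in>F. w i * (d n i)\<^sup>2))"
    by (simp add: sum.swap[of _ F] sum_distrib_left)
  also have "\<dots> \<le> 2 * (\<Sum>n<N. 2^n * B n)"
    by (intro mult_left_mono sum_mono B) auto
  finally show ?thesis .
qed

lemma fatou_fin:
  fixes w :: "'i \<Rightarrow> real" and A :: "nat \<Rightarrow> 'i \<Rightarrow> real"
  assumes w: "\<And>i. 0 \<le> w i" and lim: "\<And>i. (\<lambda>N. A N i) \<longlonglongrightarrow> L i"
    and bd: "\<And>N F. finite F \<Longrightarrow> (\<Sum>i\<in>F. w i * (A N i)\<^sup>2) \<le> K"
  shows "(\<lambda>i. w i * (L i)\<^sup>2) summable_on UNIV" "infsum (\<lambda>i. w i * (L i)\<^sup>2) UNIV \<le> K"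
proof -
  have fin: "(\<Sum>i\<in>F. w i * (L i)\<^sup>2) \<le> K" if "finite F" for F
  proof -
    have "(\<lambda>N. \<Sum>i\<in>F. w i * (A N i)\<^sup>2) \<longlonglongrightarrow> (\<Sum>i\<in>F. w i * (L i)\<^sup>2)"
      by (intro tendsto_sum tendsto_mult tendsto_const tendsto_power lim)
    then show ?thesis by (rule LIMSEQ_le_const2) (use bd[OF that] in auto)
  qed
  show s: "(\<lambda>i. w i * (L i)\<^sup>2) summable_on UNIV"
    by (rule nonneg_bdd_above_summable_on) (auto simp: w intro!: bdd_aboveI[where M=K] fin)
  show "infsum (\<lambda>i. w i * (L i)\<^sup>2) UNIV \<le> K"
    by (rule infsum_le_finite_sums[OF s]) (auto intro: fin)
qed

context wgraph begin

lemma edge_bound: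
  assumes bp: "0 < b x y" and f: "f \<in> Dt b c"
  shows "cmod (f x - f y) \<le> sqrt (2 / b x y) * sqrt (Qt b c f)"
proof -
  have "b x y * (cmod (f x - f y))\<^sup>2 \<le> 2 * Qt b c f" by (rule edge_le[OF f])
  hence "(cmod (f x - f y))\<^sup>2 \<le> 2 / b x y * Qt b c f"
    using bp by (simp add: field_simps mult.commute)
  hence "cmod (f x - f y) \<le> sqrt (2 / b x y * Qt b c f)" by (rule real_le_rsqrt)
  thus ?thesis by (metis real_sqrt_mult)
qed

lemma path_bound:
  "xs \<noteq> [] \<Longrightarrow> (\<forall>i. Suc i < length xs \<longrightarrow> 0 < b (xs!i) (xs!Suc i)) \<Longrightarrow>
    \<exists>K\<ge>0. \<forall>f\<in>Dt b c. cmod (f (last xs) - f (hd xs)) \<le> K * sqrt (Qt b c f)"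
proof (induction xs)
  case Nil thus ?case by simp
next
  case (Cons a ys)
  show ?case
  proof (cases "ys = []")
    case True thus ?thesis by (intro exI[of _ 0]) simp
  next
    case False
    have "\<forall>i. Suc i < length ys \<longrightarrow> 0 < b (ys!i) (ys!Suc i)"
    proof (intro allI impI)
      fix i assume "Suc i < length ys"
      then have "Suc (Suc i) < length (a#ys)" by simp
      then show "0 < b (ys!i) (ys!Suc i)" using Cons.prems(2) by fastforce
    qed
    then obtain K where K: "K \<ge> 0" "\<forall>f\<in>Dt b c. cmod (f (last ys) - f (hd ys)) \<le> K * sqrt (Qt b c f)"
      using Cons.IH False by blast
    have "Suc 0 < length (a#ys)" using False by simp
    hence "0 < b ((a#ys)!0) ((a#ys)!Suc 0)"
      using Cons.prems(2) by blast
    hence bp: "0 < b a (hd ys)" using False by (simp add: hd_conv_nth)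
    show ?thesis
    proof (intro exI[of _ "K + sqrt (2 / b a (hd ys))"] conjI ballI)
      show "0 \<le> K + sqrt (2 / b a (hd ys))" using K bp by simp
      fix f assume f: "f \<in> Dt b c"
      have "cmod (f (last (a#ys)) - f (hd (a#ys))) \<le> cmod (f (last ys) - f (hd ys)) + cmod (f (hd ys) - f a)"
        using False norm_triangle_ineq[of "f (last ys) - f (hd ys)" "f (hd ys) - f a"] by simp
      also have "\<dots> \<le> K * sqrt (Qt b c f) + sqrt (2 / b a (hd ys)) * sqrt (Qt b c f)"
        using K(2) f edge_bound[OF bp f] by (intro add_mono) (auto simp: norm_minus_commute)
      finally show "cmod (f (last (a#ys)) - f (hd (a#ys))) \<le> (K + sqrt (2 / b a (hd ys))) * sqrt (Qt b c f)"
        by (simp add: algebra_simps)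
    qed
  qed
qed

lemma point_bound:
  assumes conn: "connected_graph b"
  shows "\<exists>K\<ge>0. \<forall>f\<in>Dt b c. cmod (f x) \<le> K * (sqrt (Qt b c f) + cmod (f x0))"
proof (cases "x = x0")
  case True thus ?thesis by (intro exI[of _ 1]) (auto simp: Qt_nonneg)
next
  case False
  then obtain xs where xs: "xs \<noteq> []" "hd xs = x0" "last xs = x"
      "\<forall>i. Suc i < length xs \<longrightarrow> 0 < b (xs!i) (xs!Suc i)"
    using conn unfolding connected_graph_def by (metis (no_types, lifting))
  obtain K where K: "K\<ge>0" "\<forall>f\<in>Dt b c. cmod (f x - f x0) \<le> K * sqrt (Qt b c f)"
    using path_bound[OF xs(1) xs(4)] xs by auto
  show ?thesis
  proof (intro exI[of _ "K+1"] conjI ballI)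
    show "0 \<le> K + 1" using K by simp
    fix f assume f: "f \<in> Dt b c"
    have "cmod (f x) \<le> cmod (f x - f x0) + cmod (f x0)"
      using norm_triangle_ineq[of "f x - f x0" "f x0"] by simp
    also have "\<dots> \<le> K * sqrt (Qt b c f) + cmod (f x0)" using K f by auto
    also have "\<dots> \<le> (K+1) * (sqrt (Qt b c f) + cmod (f x0))"
      using K Qt_nonneg[of f] by (simp add: algebra_simps)
    finally show "cmod (f x) \<le> (K + 1) * (sqrt (Qt b c f) + cmod (f x0))" .
  qed
qed

lemma E_le_Qt: "f \<in> Dt b c \<Longrightarrow> infsum (Sq bw (df f)) UNIV \<le> 2 * Qt b c f"
  unfolding Qt_eq by (simp add: infsum_nonneg Sq_nonneg c_nn)
lemma V_le_Qt: "f \<in> Dt b c \<Longrightarrow> infsum (Sq c f) UNIV \<le> Qt b c f"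
  unfolding Qt_eq by (simp add: infsum_nonneg Sq_nonneg bw_nn)


lemma sup_bound:
  assumes conn: "connected_graph b" and cc: "canonically_compactifiable b c"
  shows "\<exists>C. \<forall>f\<in>Dt b c. \<forall>x. cmod (f x) \<le> C * (sqrt (Qt b c f) + cmod (f x0))"
proof (rule ccontr)
  define N where "N f = sqrt (Qt b c f) + cmod (f x0)" for f
  assume neg: "\<not> ?thesis"
  have N_nn: "0 \<le> N f" for f by (simp add: N_def Qt_nonneg)
  have N_scale: "N (\<lambda>x. complex_of_real t * f x) = t * N f" if t: "0 \<le> t" and f: "f \<in> Dt b c" for t f
  proof -
    have "Qt b c (\<lambda>x. complex_of_real t * f x) = t\<^sup>2 * Qt b c f"
      using Dt_scale(2)[OF f, of "complex_of_real t"] t by simp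
    hence "sqrt (Qt b c (\<lambda>x. complex_of_real t * f x)) = t * sqrt (Qt b c f)"
      using t by (simp add: real_sqrt_mult)
    thus ?thesis using t by (simp add: N_def norm_mult algebra_simps)
  qed
  have ex: "\<exists>h. h \<in> Dt b c \<and> (\<exists>x. N h \<le> (1/2)^n \<and> real n + 1 \<le> cmod (h x))" for n :: nat
  proof -
    from neg obtain f x where f: "f \<in> Dt b c" and fx: "\<not> cmod (f x) \<le> (4^n * (real n + 1)) * N f"
      unfolding N_def by blast
    show ?thesis
    proof (cases "N f = 0")
      case True
      have pos: "0 < cmod (f x)" using fx True by simp
      define t where "t = (real n + 1) / cmod (f x)"
      have t: "0 \<le> t" by (simp add: t_def)
      have "N (\<lambda>x. complex_of_real t * f x) \<le> (1/2)^n" using N_scale[OF t f] True by simp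
      moreover have "real n + 1 \<le> cmod (complex_of_real t * f x)"
      proof -
        have "cmod (complex_of_real t * f x) = t * cmod (f x)" using t by (simp add: norm_mult)
        also have "\<dots> = real n + 1" using pos by (simp add: t_def)
        finally show ?thesis by simp
      qed
      ultimately show ?thesis using Dt_scale(1)[OF f, of "complex_of_real t"] by blast
    next
      case False
      then have Np: "0 < N f" using N_nn[of f] by simp
      define t where "t = 1 / (2^n * N f)"
      have t: "0 \<le> t" using Np by (simp add: t_def)
      have "N (\<lambda>x. complex_of_real t * f x) = (1/2)^n"
        using N_scale[OF t f] Np by (simp add: t_def power_one_over)
      moreover have "real n + 1 \<le> cmod (complex_of_real t * f x)"
      proof -
        have "cmod (complex_of_real t * f x) = t * cmod (f x)" using t by (simp add: norm_mult)
        hence "cmod (complex_of_real t * f x) = cmod (f x) / (2^n * N f)"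
          using Np by (simp add: t_def)
        moreover have "(4^n * (real n + 1) * N f) / (2^n * N f) \<le> cmod (f x) / (2^n * N f)"
          using fx Np by (intro divide_right_mono) auto
        moreover have "(4^n * (real n + 1) * N f) / (2^n * N f) = 2^n * (real n + 1)"
          using Np by (simp add: field_simps power_mult_distrib[symmetric])
        moreover have "real n + 1 \<le> 2^n * (real n + 1)"
          by (simp add: mult_le_cancel_right1)
        ultimately show ?thesis by linarith
      qed
      ultimately show ?thesis using Dt_scale(1)[OF f, of "complex_of_real t"] by fastforce
    qed
  qed
  obtain h where h0: "\<And>n. h n \<in> Dt b c \<and> (\<exists>x. N (h n) \<le> (1/2)^n \<and> real n + 1 \<le> cmod (h n x))"
    using ex by metis
  obtain xn where h1: "\<And>n. N (h n) \<le> (1/2)^n \<and> real n + 1 \<le> cmod (h n (xn n))"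
    using h0 by metis
  have hD: "h n \<in> Dt b c" for n using h0 by blast
  have hN: "N (h n) \<le> (1/2)^n" for n using h1 by blast
  have hx: "real n + 1 \<le> cmod (h n (xn n))" for n using h1 by blast
  have hQ: "Qt b c (h n) \<le> (1/4)^n" for n
  proof -
    have "sqrt (Qt b c (h n)) \<le> (1/2)^n"
      using hN[of n] norm_ge_zero[of "h n x0"] unfolding N_def by linarith
    hence "(sqrt (Qt b c (h n)))\<^sup>2 \<le> ((1/2)^n)\<^sup>2" by (intro power_mono) (auto simp: Qt_nonneg)
    moreover have "((1/2::real)^n)\<^sup>2 = ((1/2)\<^sup>2)^n" by (metis power_mult mult.commute)
    ultimately show ?thesis using Qt_nonneg[of "h n"] by (simp add: power2_eq_square)
  qed
  define a where "a n x = cmod (h n x)" for n x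
  have a_nn: "0 \<le> a n x" for n x by (simp add: a_def)
  have a_sum: "summable (\<lambda>n. a n x)" for x
  proof -
    obtain K where K: "K \<ge> 0" "\<forall>f\<in>Dt b c. cmod (f x) \<le> K * (sqrt (Qt b c f) + cmod (f x0))"
      using point_bound[OF conn] by blast
    have bnd: "a n x \<le> K * (1/2)^n" for n
    proof -
      have "a n x \<le> K * N (h n)" using K hD[of n] by (simp add: a_def N_def)
      also have "\<dots> \<le> K * (1/2)^n" using hN[of n] K by (intro mult_left_mono) auto
      finally show ?thesis .
    qed
    have sg: "summable (\<lambda>n. K * (1/2::real)^n)" by (intro summable_mult summable_geometric) auto
    show ?thesis by (rule summable_comparison_test'[OF sg, where N=0]) (use bnd a_nn in auto)
  qed
  define gr where "gr x = suminf (\<lambda>n. a n x)" for x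
  define g where "g x = complex_of_real (gr x)" for x
  have conv: "(\<lambda>N. \<Sum>n<N. a n x) \<longlonglongrightarrow> gr x" for x by (simp add: gr_def summable_LIMSEQ a_sum)
  have geo: "2 * (\<Sum>n<M. 2^n * (k * (1/4::real)^n)) \<le> 4 * k" if "0 \<le> k" for M k
  proof -
    have "(\<Sum>n<M. 2^n * (k * (1/4::real)^n)) = k * (\<Sum>n<M. (1/2)^n)"
      by (simp add: sum_distrib_left power_mult_distrib[symmetric] algebra_simps)
    also have "\<dots> \<le> k * 2" using that by (intro mult_left_mono geom_half_le) auto
    finally show ?thesis by simp
  qed
  have E: "(\<lambda>i. bw i * ((\<lambda>(x,y). gr x - gr y) i)\<^sup>2) summable_on UNIV"
  proof (rule fatou_fin[where A = "\<lambda>N (x,y). (\<Sum>n<N. a n x) - (\<Sum>n<N. a n y)" and K = 8, OF bw_nn])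
    show "(\<lambda>N. ((\<lambda>N (x,y). (\<Sum>n<N. a n x) - (\<Sum>n<N. a n y)) N i)) \<longlonglongrightarrow> (\<lambda>(x,y). gr x - gr y) i" for i
      by (cases i) (auto intro!: tendsto_diff conv)
    fix M :: nat and F :: "('x \<times> 'x) set" assume F: "finite F"
    have "(\<Sum>i\<in>F. bw i * ((\<lambda>N (x,y). (\<Sum>n<N. a n x) - (\<Sum>n<N. a n y)) M i)\<^sup>2)
        \<le> 2 * (\<Sum>n<M. 2^n * (2 * (1/4)^n))"
    proof (rule weighted_cs_sum[OF bw_nn F, where d = "\<lambda>n i. cmod (df (h n) i)"])
      fix i assume "i \<in> F"
      obtain x y where i: "i = (x,y)" by (cases i)
      have "\<bar>(\<Sum>n<M. a n x) - (\<Sum>n<M. a n y)\<bar> = \<bar>\<Sum>n<M. a n x - a n y\<bar>" by (simp add: sum_subtractf)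
      also have "\<dots> \<le> (\<Sum>n<M. \<bar>a n x - a n y\<bar>)" by (rule sum_abs)
      also have "\<dots> \<le> (\<Sum>n<M. cmod (df (h n) i))"
        by (intro sum_mono) (auto simp: a_def df_def i norm_triangle_ineq3)
      finally have "\<bar>(\<Sum>n<M. a n x) - (\<Sum>n<M. a n y)\<bar> \<le> (\<Sum>n<M. cmod (df (h n) i))" .
      then show "((\<lambda>N (x,y). (\<Sum>n<N. a n x) - (\<Sum>n<N. a n y)) M i)\<^sup>2 \<le> (\<Sum>n<M. cmod (df (h n) i))\<^sup>2"
        unfolding i by (simp add: abs_le_square_iff[symmetric] sum_nonneg)
    next
      fix n
      have s: "Sq bw (df (h n)) summable_on UNIV" using hD[of n] Dt_iff by auto
      have "(\<Sum>i\<in>F. bw i * (cmod (df (h n) i))\<^sup>2) = sum (Sq bw (df (h n))) F" by (simp add: Sq_def)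
      also have "\<dots> \<le> infsum (Sq bw (df (h n))) UNIV"
        by (rule finite_sum_le_infsum[OF s F]) (auto intro: Sq_nonneg bw_nn)
      also have "\<dots> \<le> 2 * Qt b c (h n)" by (rule E_le_Qt[OF hD])
      also have "\<dots> \<le> 2 * (1/4)^n" using hQ[of n] by simp
      finally show "(\<Sum>i\<in>F. bw i * (cmod (df (h n) i))\<^sup>2) \<le> 2 * (1/4)^n" .
    qed
    also have "\<dots> \<le> 8" using geo[of 2 M] by simp
    finally show "(\<Sum>i\<in>F. bw i * ((\<lambda>N (x,y). (\<Sum>n<N. a n x) - (\<Sum>n<N. a n y)) M i)\<^sup>2) \<le> 8" .
  qed
  have V: "(\<lambda>x. c x * (gr x)\<^sup>2) summable_on UNIV"
  proof (rule fatou_fin[where A = "\<lambda>N x. (\<Sum>n<N. a n x)" and K = 4, OF c_nn conv])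
    fix M :: nat and F :: "'x set" assume F: "finite F"
    have "(\<Sum>x\<in>F. c x * (\<Sum>n<M. a n x)\<^sup>2) \<le> 2 * (\<Sum>n<M. 2^n * (1 * (1/4)^n))"
    proof (rule weighted_cs_sum[OF c_nn F, where d = "a"])
      fix n
      have s: "Sq c (h n) summable_on UNIV" using hD[of n] Dt_iff by auto
      have "(\<Sum>i\<in>F. c i * (a n i)\<^sup>2) = sum (Sq c (h n)) F" by (simp add: Sq_def a_def)
      also have "\<dots> \<le> infsum (Sq c (h n)) UNIV"
        by (rule finite_sum_le_infsum[OF s F]) (auto intro: Sq_nonneg c_nn)
      also have "\<dots> \<le> Qt b c (h n)" by (rule V_le_Qt[OF hD])
      also have "\<dots> \<le> 1 * (1/4)^n" using hQ[of n] by simp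
      finally show "(\<Sum>i\<in>F. c i * (a n i)\<^sup>2) \<le> 1 * (1/4)^n" .
    qed simp
    also have "\<dots> \<le> 4" using geo[of 1 M] by simp
    finally show "(\<Sum>x\<in>F. c x * (\<Sum>n<M. a n x)\<^sup>2) \<le> 4" .
  qed
  have "g \<in> Dt b c"
  proof -
    have "Sq bw (df g) = (\<lambda>i. bw i * ((\<lambda>(x,y). gr x - gr y) i)\<^sup>2)"
      by (auto simp: fun_eq_iff Sq_def df_def g_def simp flip: of_real_diff)
    moreover have "Sq c g = (\<lambda>x. c x * (gr x)\<^sup>2)"
      by (auto simp: fun_eq_iff Sq_def g_def)
    ultimately show ?thesis using E V by (simp add: Dt_iff)
  qed
  hence "bounded (range g)" using cc by (auto simp: canonically_compactifiable_def linf_def)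
  then obtain M where M: "\<And>x. cmod (g x) \<le> M" by (auto simp: bounded_iff)
  define n where "n = nat \<lceil>M\<rceil>"
  have "a n (xn n) \<le> gr (xn n)"
    unfolding gr_def using sum_le_suminf[OF a_sum, of "{n}"] a_nn by simp
  moreover have "gr (xn n) \<le> M" using M[of "xn n"] by (simp add: g_def)
  moreover have "real n + 1 \<le> a n (xn n)" using hx[of n] by (simp add: a_def)
  moreover have "M \<le> real n" by (simp add: n_def) linarith
  ultimately show False by linarith
qed

end


definition c0 :: "('x \<Rightarrow> complex) \<Rightarrow> bool" where
  "c0 f \<longleftrightarrow> (\<forall>\<epsilon>>0. finite {x. \<epsilon> \<le> cmod (f x)})"

lemma unif_Cc_c0:
  assumes "\<And>\<epsilon>. \<epsilon> > 0 \<Longrightarrow> \<exists>\<phi>\<in>Cc. \<forall>x. cmod (u x - \<phi> x) \<le> \<epsilon>"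
  shows "c0 u"
  unfolding c0_def
proof (intro allI impI)
  fix \<epsilon> :: real assume e: "\<epsilon> > 0"
  obtain \<phi> where \<phi>: "\<phi> \<in> Cc" "\<forall>x. cmod (u x - \<phi> x) \<le> \<epsilon>/2" using assms[of "\<epsilon>/2"] e by auto
  have "{x. \<epsilon> \<le> cmod (u x)} \<subseteq> {x. \<phi> x \<noteq> 0}"
  proof
    fix x assume x: "x \<in> {x. \<epsilon> \<le> cmod (u x)}"
    show "x \<in> {x. \<phi> x \<noteq> 0}"
    proof (rule ccontr)
      assume "x \<notin> {x. \<phi> x \<noteq> 0}"
      then have "\<phi> x = 0" by simp
      then show False using \<phi>(2)[rule_format, of x] x e by simp
    qed
  qed
  thus "finite {x. \<epsilon> \<le> cmod (u x)}" using \<phi>(1) by (auto simp: Cc_def intro: finite_subset)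
qed

definition Pc :: "real \<Rightarrow> complex \<Rightarrow> complex" where "Pc e z = closest_point (cball 0 e) z"

lemma Pc_lip: "0 \<le> e \<Longrightarrow> cmod (Pc e z - Pc e w) \<le> cmod (z - w)"
  using closest_point_lipschitz[of "cball (0::complex) e" z w] by (simp add: Pc_def dist_norm)

lemma Pc_in: "0 \<le> e \<Longrightarrow> cmod (Pc e z) \<le> e"
  using closest_point_in_set[of "cball (0::complex) e" z] by (simp add: Pc_def)

lemma Pc_self: "cmod z \<le> e \<Longrightarrow> Pc e z = z"
  by (simp add: Pc_def closest_point_self)

lemma Pc_le: "0 \<le> e \<Longrightarrow> cmod (Pc e z) \<le> cmod z"
  using Pc_lip[of e z 0] Pc_self[of 0 e] by simp

lemma tail_small:
  fixes a w :: "'i \<Rightarrow> real"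
  assumes a: "\<And>i. 0 \<le> a i" "a summable_on UNIV" and w: "\<And>i. 0 \<le> w i" and eta: "\<eta> > 0"
  shows "\<exists>\<delta>>0. \<forall>f. (\<forall>i. 0 \<le> f i \<and> f i \<le> a i \<and> f i \<le> \<delta> * w i) \<longrightarrow> f summable_on UNIV \<and> infsum f UNIV < \<eta>"
proof -
  obtain F where F: "finite F" "dist (sum a F) (infsum a UNIV) \<le> \<eta>/2"
    using has_sum_finite_approximation[OF has_sum_infsum[OF a(2)], of "\<eta>/2"] eta by auto
  define W where "W = sum w F"
  have W: "0 \<le> W" unfolding W_def by (intro sum_nonneg w)
  define \<delta> where "\<delta> = \<eta> / (2 * (W + 1))"
  have dpos: "\<delta> > 0" using eta W by (simp add: \<delta>_def)
  have aF: "a summable_on F" "a summable_on (-F)" using a(2) by (auto intro: summable_on_subset_banach)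
  have asplit: "infsum a UNIV = infsum a F + infsum a (-F)"
    using infsum_Un_disjoint[OF aF] by (simp add: Un_commute)
  show ?thesis
  proof (intro exI[of _ \<delta>] conjI allI impI dpos)
    fix f assume f: "\<forall>i. 0 \<le> f i \<and> f i \<le> a i \<and> f i \<le> \<delta> * w i"
    show fs: "f summable_on UNIV" by (rule summable_on_comparison_test[OF a(2)]) (use f in auto)
    have fF: "f summable_on F" "f summable_on (-F)" using fs by (auto intro: summable_on_subset_banach)
    have "infsum f UNIV = infsum f F + infsum f (-F)"
      using infsum_Un_disjoint[OF fF] by (simp add: Un_commute)
    also have "infsum f F = sum f F" using F(1) by simp
    also have "sum f F \<le> \<delta> * W" unfolding W_def sum_distrib_left by (intro sum_mono) (use f in auto)
    also have "infsum f (-F) \<le> infsum a (-F)" using fF aF f by (intro infsum_mono) auto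
    also have "infsum a (-F) = infsum a UNIV - sum a F" using asplit F(1) by simp
    also have "\<dots> \<le> \<eta>/2" using F(2) unfolding dist_real_def abs_le_iff by linarith
    also have "\<delta> * W < \<eta>/2"
    proof -
      have "\<delta> * W = \<eta> * W / (2 * (W+1))" by (simp add: \<delta>_def)
      also have "\<dots> < \<eta> * (W+1) / (2 * (W+1))" using eta W by (intro divide_strict_right_mono) auto
      also have "\<dots> = \<eta>/2" using W by (simp add: field_simps)
      finally show ?thesis .
    qed
    finally show "infsum f UNIV < \<eta>" by simp
  qed
qed

locale fgraph = wgraph b c for b :: "'x \<Rightarrow> 'x \<Rightarrow> real" and c +
  fixes m :: "'x \<Rightarrow> real"
  assumes conn: "connected_graph b" and cc: "canonically_compactifiable b c"
    and m_pos: "\<forall>x. 0 < m x" and m_sum: "m summable_on UNIV"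
begin

lemma Dt_bounded: "u \<in> Dt b c \<Longrightarrow> \<exists>M. \<forall>x. cmod (u x) \<le> M"
  using cc by (auto simp: canonically_compactifiable_def linf_def bounded_iff)

lemma Sq_m: "Sq m f = (\<lambda>x. m x * (cmod (f x))\<^sup>2)" by (simp add: fun_eq_iff Sq_def)

lemma ell2_iff: "f \<in> ell2 m \<longleftrightarrow> Sq m f summable_on UNIV"
  by (simp add: ell2_def Sq_m)

lemma l2_eq: "l2norm_sq m f = infsum (Sq m f) UNIV"
  by (simp add: l2norm_sq_def Sq_m)

lemma m_nn: "0 \<le> m x" using m_pos by (auto intro: less_imp_le)

lemma bounded_ell2:
  assumes "\<And>x. cmod (u x) \<le> M" shows "u \<in> ell2 m"
proof -
  have "(\<lambda>x. M\<^sup>2 * m x) summable_on UNIV" using m_sum by (rule summable_on_cmult_right)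
  moreover have "Sq m u x \<le> M\<^sup>2 * m x" for x
  proof -
    have "(cmod (u x))\<^sup>2 \<le> M\<^sup>2" using assms[of x] by (intro power_mono) auto
    thus ?thesis using m_nn[of x] by (simp add: Sq_def mult_left_mono mult.commute)
  qed
  ultimately show ?thesis unfolding ell2_iff
    by (rule summable_on_comparison_test) (auto intro: Sq_nonneg m_nn)
qed

lemma Dt_ell2: "u \<in> Dt b c \<Longrightarrow> u \<in> ell2 m"
  using Dt_bounded bounded_ell2 by blast

lemma fun_diff_eq: "(u - \<phi>) = (\<lambda>x. u x - \<phi> x)" by (simp add: fun_eq_iff)

lemma DQD_c0:
  assumes u: "u \<in> DQD b c m" shows "c0 u"
proof (rule unif_Cc_c0)
  fix \<epsilon> :: real assume e: "\<epsilon> > 0"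
  obtain C where C: "\<forall>f\<in>Dt b c. \<forall>x. cmod (f x) \<le> C * (sqrt (Qt b c f) + cmod (f x0))"
    using sup_bound[OF conn cc] by blast
  define C' where "C' = max C 0 + 1"
  have C'pos: "C' > 0" by (simp add: C'_def)
  have C': "\<forall>f\<in>Dt b c. \<forall>x. cmod (f x) \<le> C' * (sqrt (Qt b c f) + cmod (f x0))"
  proof (intro ballI allI)
    fix f x assume f: "f \<in> Dt b c"
    have N: "0 \<le> sqrt (Qt b c f) + cmod (f x0)" by (simp add: Qt_nonneg)
    have "cmod (f x) \<le> C * (sqrt (Qt b c f) + cmod (f x0))" using C f by blast
    also have "\<dots> \<le> C' * (sqrt (Qt b c f) + cmod (f x0))"
      using N by (intro mult_right_mono) (auto simp: C'_def)
    finally show "cmod (f x) \<le> C' * (sqrt (Qt b c f) + cmod (f x0))" .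
  qed
  define \<eta> where "\<eta> = \<epsilon> / (2 * C')"
  have eta: "\<eta> > 0" using e C'pos by (simp add: \<eta>_def)
  define \<delta> where "\<delta> = min (\<eta>\<^sup>2) (m x0 * \<eta>\<^sup>2)"
  have dpos: "\<delta> > 0" using eta m_pos by (simp add: \<delta>_def)
  obtain \<phi> where \<phi>: "\<phi> \<in> Cc" "Qt b c (u - \<phi>) + l2norm_sq m (u - \<phi>) < \<delta>"
    using u dpos unfolding DQD_def by blast
  have uD: "u \<in> Dt b c" "u \<in> ell2 m" using u by (auto simp: DQD_def)
  have vD: "(\<lambda>x. u x - \<phi> x) \<in> Dt b c" using Dt_diff(1)[OF uD(1) Cc_Dt[OF \<phi>(1)]] .
  have v2: "(\<lambda>x. u x - \<phi> x) \<in> ell2 m" by (rule Dt_ell2[OF vD])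
  have l2nn: "0 \<le> l2norm_sq m (u - \<phi>)" unfolding l2_eq by (intro infsum_nonneg Sq_nonneg m_nn)
  have Q: "Qt b c (\<lambda>x. u x - \<phi> x) < \<delta>" using \<phi>(2) l2nn by (simp add: fun_diff_eq)
  have "m x0 * (cmod (u x0 - \<phi> x0))\<^sup>2 \<le> l2norm_sq m (u - \<phi>)"
  proof -
    have s: "Sq m (\<lambda>x. u x - \<phi> x) summable_on UNIV" using v2 ell2_iff by blast
    have "Sq m (\<lambda>x. u x - \<phi> x) x0 \<le> infsum (Sq m (\<lambda>x. u x - \<phi> x)) UNIV"
      using finite_sum_le_infsum[OF s, of "{x0}"] by (simp add: Sq_nonneg m_nn)
    thus ?thesis by (simp add: l2_eq fun_diff_eq Sq_def)
  qed
  also have "\<dots> < \<delta>" using \<phi>(2) Qt_nonneg[of "u - \<phi>"] by simp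
  finally have P: "m x0 * (cmod (u x0 - \<phi> x0))\<^sup>2 < m x0 * \<eta>\<^sup>2" by (simp add: \<delta>_def)
  have P': "cmod (u x0 - \<phi> x0) \<le> \<eta>"
  proof -
    have "(cmod (u x0 - \<phi> x0))\<^sup>2 < \<eta>\<^sup>2" using P m_pos by (simp add: mult_less_cancel_left_pos)
    thus ?thesis using eta by (meson abs_le_square_iff less_imp_le norm_ge_zero abs_of_nonneg power2_less_imp_less less_eq_real_def)
  qed
  have Q': "sqrt (Qt b c (\<lambda>x. u x - \<phi> x)) \<le> \<eta>"
  proof -
    have "Qt b c (\<lambda>x. u x - \<phi> x) \<le> \<eta>\<^sup>2" using Q by (simp add: \<delta>_def)
    thus ?thesis using eta by (simp add: real_sqrt_le_iff' less_imp_le real_le_lsqrt)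
  qed
  show "\<exists>\<phi>\<in>Cc. \<forall>x. cmod (u x - \<phi> x) \<le> \<epsilon>"
  proof (intro bexI[OF _ \<phi>(1)] allI)
    fix x
    have "cmod (u x - \<phi> x) \<le> C' * (sqrt (Qt b c (\<lambda>x. u x - \<phi> x)) + cmod (u x0 - \<phi> x0))"
      using C'[rule_format, OF vD, of x] by simp
    also have "\<dots> \<le> C' * (2 * \<eta>)" using Q' P' C'pos by (intro mult_left_mono) auto
    also have "\<dots> = \<epsilon>" using C'pos by (simp add: \<eta>_def)
    finally show "cmod (u x - \<phi> x) \<le> \<epsilon>" .
  qed
qed


lemma Dto_c0:
  assumes u: "u \<in> Dt_o b c x0" shows "c0 u"
proof (rule unif_Cc_c0)
  fix \<epsilon> :: real assume e: "\<epsilon> > 0"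
  obtain C where C: "\<forall>f\<in>Dt b c. \<forall>x. cmod (f x) \<le> C * (sqrt (Qt b c f) + cmod (f x0))"
    using sup_bound[OF conn cc] by blast
  define C' where "C' = max C 0 + 1"
  have C'pos: "C' > 0" by (simp add: C'_def)
  have C': "\<forall>f\<in>Dt b c. \<forall>x. cmod (f x) \<le> C' * (sqrt (Qt b c f) + cmod (f x0))"
  proof (intro ballI allI)
    fix f x assume f: "f \<in> Dt b c"
    have N: "0 \<le> sqrt (Qt b c f) + cmod (f x0)" by (simp add: Qt_nonneg)
    have "cmod (f x) \<le> C * (sqrt (Qt b c f) + cmod (f x0))" using C f by blast
    also have "\<dots> \<le> C' * (sqrt (Qt b c f) + cmod (f x0))"
      using N by (intro mult_right_mono) (auto simp: C'_def)
    finally show "cmod (f x) \<le> C' * (sqrt (Qt b c f) + cmod (f x0))" .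
  qed
  define \<eta> where "\<eta> = \<epsilon> / (2 * C')"
  have eta: "\<eta> > 0" using e C'pos by (simp add: \<eta>_def)
  have eta2: "\<eta>\<^sup>2 > 0" using eta by simp
  obtain \<phi> where \<phi>: "\<phi> \<in> Cc" "Qt b c (u - \<phi>) + (cmod (u x0 - \<phi> x0))\<^sup>2 < \<eta>\<^sup>2"
    using u eta2 unfolding Dt_o_def by blast
  have uD: "u \<in> Dt b c" using u by (auto simp: Dt_o_def)
  have vD: "(\<lambda>x. u x - \<phi> x) \<in> Dt b c" using Dt_diff(1)[OF uD(1) Cc_Dt[OF \<phi>(1)]] .
  have "Qt b c (u - \<phi>) \<le> \<eta>\<^sup>2" using \<phi>(2) zero_le_power2[of "cmod (u x0 - \<phi> x0)"] by linarith
  hence Q: "Qt b c (\<lambda>x. u x - \<phi> x) \<le> \<eta>\<^sup>2" by (simp add: fun_diff_eq)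
  have P: "(cmod (u x0 - \<phi> x0))\<^sup>2 \<le> \<eta>\<^sup>2" using \<phi>(2) Qt_nonneg[of "u - \<phi>"] by simp
  have P': "cmod (u x0 - \<phi> x0) \<le> \<eta>"
    using P eta by (meson abs_le_square_iff norm_ge_zero abs_of_nonneg less_imp_le power2_le_imp_le)
  have Q': "sqrt (Qt b c (\<lambda>x. u x - \<phi> x)) \<le> \<eta>"
    using Q eta by (simp add: real_sqrt_le_iff' less_imp_le real_le_lsqrt)
  show "\<exists>\<phi>\<in>Cc. \<forall>x. cmod (u x - \<phi> x) \<le> \<epsilon>"
  proof (intro bexI[OF _ \<phi>(1)] allI)
    fix x
    have "cmod (u x - \<phi> x) \<le> C' * (sqrt (Qt b c (\<lambda>x. u x - \<phi> x)) + cmod (u x0 - \<phi> x0))"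
      using C'[rule_format, OF vD, of x] by simp
    also have "\<dots> \<le> C' * (2 * \<eta>)" using Q' P' C'pos by (intro mult_left_mono) auto
    also have "\<dots> = \<epsilon>" using C'pos by (simp add: \<eta>_def)
    finally show "cmod (u x - \<phi> x) \<le> \<epsilon>" .
  qed
qed

lemma c0_cut:
  assumes u: "u \<in> Dt b c" "c0 u" and eta: "\<eta> > 0"
  shows "\<exists>\<phi>\<in>Cc. Qt b c (u - \<phi>) + l2norm_sq m (u - \<phi>) < \<eta> \<and> Qt b c (u - \<phi>) + (cmod (u x0 - \<phi> x0))\<^sup>2 < \<eta>"
proof -
  have sE: "Sq bw (df u) summable_on UNIV" and sV: "Sq c u summable_on UNIV" using u Dt_iff by auto
  have sL: "Sq m u summable_on UNIV" using Dt_ell2[OF u(1)] ell2_iff by auto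
  have e3: "\<eta>/3 > 0" using eta by simp
  obtain \<delta>1 where d1: "\<delta>1 > 0" "\<forall>f. (\<forall>i. 0 \<le> f i \<and> f i \<le> Sq bw (df u) i \<and> f i \<le> \<delta>1 * (4 * bw i)) \<longrightarrow> f summable_on UNIV \<and> infsum f UNIV < \<eta>/3"
    using tail_small[of "Sq bw (df u)" "\<lambda>i. 4 * bw i", OF Sq_nonneg[OF bw_nn] sE _ e3] bw_nn by auto
  obtain \<delta>2 where d2: "\<delta>2 > 0" "\<forall>f. (\<forall>i. 0 \<le> f i \<and> f i \<le> Sq c u i \<and> f i \<le> \<delta>2 * c i) \<longrightarrow> f summable_on UNIV \<and> infsum f UNIV < \<eta>/3"
    using tail_small[of "Sq c u" c, OF Sq_nonneg[OF c_nn] sV c_nn e3] by auto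
  obtain \<delta>3 where d3: "\<delta>3 > 0" "\<forall>f. (\<forall>i. 0 \<le> f i \<and> f i \<le> Sq m u i \<and> f i \<le> \<delta>3 * m i) \<longrightarrow> f summable_on UNIV \<and> infsum f UNIV < \<eta>/3"
    using tail_small[of "Sq m u" m, OF Sq_nonneg[OF m_nn] sL m_nn e3] by auto
  define \<delta> where "\<delta> = min (min \<delta>1 \<delta>2) (min \<delta>3 (\<eta>/3))"
  have dpos: "\<delta> > 0" using d1 d2 d3 eta by (simp add: \<delta>_def)
  define e where "e = sqrt \<delta>"
  have epos: "e > 0" using dpos by (simp add: e_def)
  have e2: "e\<^sup>2 = \<delta>" using dpos by (simp add: e_def)
  define v where "v x = Pc e (u x)" for x
  define \<phi> where "\<phi> x = u x - v x" for x
  have uv: "u - \<phi> = v" by (simp add: fun_eq_iff \<phi>_def)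
  have \<phi>Cc: "\<phi> \<in> Cc"
  proof -
    have "{x. \<phi> x \<noteq> 0} \<subseteq> {x. e \<le> cmod (u x)}"
    proof
      fix x assume x: "x \<in> {x. \<phi> x \<noteq> 0}"
      show "x \<in> {x. e \<le> cmod (u x)}"
      proof (rule ccontr)
        assume "x \<notin> {x. e \<le> cmod (u x)}"
        then have "cmod (u x) \<le> e" by simp
        then have "\<phi> x = 0" by (simp add: \<phi>_def v_def Pc_self)
        then show False using x by simp
      qed
    qed
    moreover have "finite {x. e \<le> cmod (u x)}" using u(2) epos by (simp add: c0_def)
    ultimately show ?thesis by (auto simp: Cc_def intro: finite_subset)
  qed
  have ve: "cmod (v x) \<le> e" for x using Pc_in[of e] epos by (simp add: v_def)
  have vu: "cmod (v x) \<le> cmod (u x)" for x using Pc_le[of e] epos by (simp add: v_def)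
  have vlip: "cmod (v x - v y) \<le> cmod (u x - u y)" for x y using Pc_lip[of e] epos by (simp add: v_def)
  have E: "Sq bw (df v) summable_on UNIV \<and> infsum (Sq bw (df v)) UNIV < \<eta>/3"
  proof (rule d1(2)[rule_format], intro allI conjI)
    fix i :: "'x \<times> 'x"
    obtain x y where i: "i = (x,y)" by (cases i)
    show "0 \<le> Sq bw (df v) i" by (rule Sq_nonneg[OF bw_nn])
    show "Sq bw (df v) i \<le> Sq bw (df u) i"
      unfolding i Sq_def df_def using vlip[of x y] bw_nn[of "(x,y)"]
      by (auto intro!: mult_left_mono power_mono)
    have "cmod (v x - v y) \<le> 2 * e" using norm_triangle_ineq4[of "v x" "v y"] ve[of x] ve[of y] by simp
    hence "(cmod (v x - v y))\<^sup>2 \<le> (2*e)\<^sup>2" by (intro power_mono) auto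
    hence "(cmod (v x - v y))\<^sup>2 \<le> 4 * \<delta>" using e2 by (simp add: power_mult_distrib)
    hence "Sq bw (df v) i \<le> bw i * (4 * \<delta>)"
      unfolding i Sq_def df_def using bw_nn[of "(x,y)"] by (auto intro!: mult_left_mono)
    also have "\<dots> \<le> bw i * (4 * \<delta>1)" using bw_nn[of i]
      by (intro mult_left_mono) (auto simp: \<delta>_def)
    also have "\<dots> = \<delta>1 * (4 * bw i)" by simp
    finally show "Sq bw (df v) i \<le> \<delta>1 * (4 * bw i)" .
  qed
  have sqe: "(cmod (v x))\<^sup>2 \<le> \<delta>" for x
  proof -
    have "(cmod (v x))\<^sup>2 \<le> e\<^sup>2" using ve[of x] by (intro power_mono) auto
    thus ?thesis using e2 by simp
  qed
  have V: "Sq c v summable_on UNIV \<and> infsum (Sq c v) UNIV < \<eta>/3"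
  proof (rule d2(2)[rule_format], intro allI conjI)
    fix x
    show "0 \<le> Sq c v x" by (rule Sq_nonneg[OF c_nn])
    show "Sq c v x \<le> Sq c u x" unfolding Sq_def using vu[of x] c_nn[of x]
      by (auto intro!: mult_left_mono power_mono)
    have "Sq c v x \<le> c x * \<delta>" unfolding Sq_def using sqe[of x] c_nn[of x] by (auto intro!: mult_left_mono)
    also have "\<dots> \<le> c x * \<delta>2" using c_nn[of x] by (intro mult_left_mono) (auto simp: \<delta>_def)
    also have "\<dots> = \<delta>2 * c x" by simp
    finally show "Sq c v x \<le> \<delta>2 * c x" .
  qed
  have L: "Sq m v summable_on UNIV \<and> infsum (Sq m v) UNIV < \<eta>/3"
  proof (rule d3(2)[rule_format], intro allI conjI)
    fix x
    show "0 \<le> Sq m v x" by (rule Sq_nonneg[OF m_nn])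
    show "Sq m v x \<le> Sq m u x" unfolding Sq_def using vu[of x] m_nn[of x]
      by (auto intro!: mult_left_mono power_mono)
    have "Sq m v x \<le> m x * \<delta>" unfolding Sq_def using sqe[of x] m_nn[of x] by (auto intro!: mult_left_mono)
    also have "\<dots> \<le> m x * \<delta>3" using m_nn[of x] by (intro mult_left_mono) (auto simp: \<delta>_def)
    also have "\<dots> = \<delta>3 * m x" by simp
    finally show "Sq m v x \<le> \<delta>3 * m x" .
  qed
  have Ez: "0 \<le> infsum (Sq bw (df v)) UNIV" by (intro infsum_nonneg Sq_nonneg bw_nn)
  have Qv: "Qt b c v < \<eta>/3 + \<eta>/3" using E V Ez unfolding Qt_eq by linarith
  have x0b: "(cmod (v x0))\<^sup>2 \<le> \<eta>/3" using sqe[of x0] by (simp add: \<delta>_def)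
  show ?thesis
  proof (intro bexI[OF _ \<phi>Cc] conjI)
    show "Qt b c (u - \<phi>) + l2norm_sq m (u - \<phi>) < \<eta>" using Qv L unfolding uv l2_eq by linarith
    have "u x0 - \<phi> x0 = v x0" by (simp add: \<phi>_def)
    then show "Qt b c (u - \<phi>) + (cmod (u x0 - \<phi> x0))\<^sup>2 < \<eta>" using Qv x0b unfolding uv by simp
  qed
qed

lemma DQD_eq: "DQD b c m = {u \<in> Dt b c. c0 u}"
proof
  show "DQD b c m \<subseteq> {u \<in> Dt b c. c0 u}" using DQD_c0 by (auto simp: DQD_def)
  show "{u \<in> Dt b c. c0 u} \<subseteq> DQD b c m"
  proof
    fix u assume u: "u \<in> {u \<in> Dt b c. c0 u}"
    have "\<forall>\<epsilon>>0. \<exists>\<phi>\<in>Cc. Qt b c (u - \<phi>) + l2norm_sq m (u - \<phi>) < \<epsilon>"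
    proof (intro allI impI)
      fix \<epsilon> :: real assume "\<epsilon> > 0"
      then show "\<exists>\<phi>\<in>Cc. Qt b c (u - \<phi>) + l2norm_sq m (u - \<phi>) < \<epsilon>"
        using c0_cut[of u \<epsilon>] u by blast
    qed
    then show "u \<in> DQD b c m" using u Dt_ell2 by (auto simp: DQD_def)
  qed
qed

lemma Dto_eq: "Dt_o b c x0 = {u \<in> Dt b c. c0 u}"
proof
  show "Dt_o b c x0 \<subseteq> {u \<in> Dt b c. c0 u}" using Dto_c0 by (auto simp: Dt_o_def)
  show "{u \<in> Dt b c. c0 u} \<subseteq> Dt_o b c x0"
  proof
    fix u assume u: "u \<in> {u \<in> Dt b c. c0 u}"
    have "\<forall>\<epsilon>>0. \<exists>\<phi>\<in>Cc. Qt b c (u - \<phi>) + (cmod (u x0 - \<phi> x0))\<^sup>2 < \<epsilon>"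
    proof (intro allI impI)
      fix \<epsilon> :: real assume "\<epsilon> > 0"
      then show "\<exists>\<phi>\<in>Cc. Qt b c (u - \<phi>) + (cmod (u x0 - \<phi> x0))\<^sup>2 < \<epsilon>"
        using c0_cut[of u \<epsilon> x0] u by blast
    qed
    then show "u \<in> Dt_o b c x0" using u by (auto simp: Dt_o_def)
  qed
qed

end


lemma linf_iff: "f \<in> linf \<longleftrightarrow> (\<exists>M. \<forall>x. cmod (f x) \<le> M)"
  by (auto simp: linf_def bounded_iff)

lemma cstar_linf: "cstar_subalgebra (linf :: ('a \<Rightarrow> complex) set)"
proof -
  have add: "(\<lambda>x. f x + g x) \<in> linf" if fl: "f \<in> linf" and gl: "g \<in> linf" for f g :: "'a \<Rightarrow> complex"
  proof -
    obtain M1 where M1: "\<And>x. cmod (f x) \<le> M1" using fl unfolding linf_iff by blast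
    obtain M2 where M2: "\<And>x. cmod (g x) \<le> M2" using gl unfolding linf_iff by blast
    have "cmod (f x + g x) \<le> M1 + M2" for x
      using norm_triangle_ineq[of "f x" "g x"] M1[of x] M2[of x] by linarith
    thus ?thesis unfolding linf_iff by (intro exI[of _ "M1 + M2"] allI)
  qed
  have mult: "(\<lambda>x. f x * g x) \<in> linf" if fl: "f \<in> linf" and gl: "g \<in> linf" for f g :: "'a \<Rightarrow> complex"
  proof -
    obtain M1 where M1: "\<And>x. cmod (f x) \<le> M1" using fl unfolding linf_iff by blast
    obtain M2 where M2: "\<And>x. cmod (g x) \<le> M2" using gl unfolding linf_iff by blast
    have "cmod (f x * g x) \<le> M1 * M2" for x
    proof -
      have "cmod (f x * g x) = cmod (f x) * cmod (g x)" by (rule norm_mult)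
      also have "\<dots> \<le> M1 * M2" by (rule mult_mono'[OF M1 M2 norm_ge_zero norm_ge_zero])
      finally show ?thesis .
    qed
    thus ?thesis unfolding linf_iff by (intro exI[of _ "M1 * M2"] allI)
  qed
  have scale: "(\<lambda>x. a * f x) \<in> linf" if fl: "f \<in> linf" for a and f :: "'a \<Rightarrow> complex"
  proof -
    obtain M where M: "\<And>x. cmod (f x) \<le> M" using fl unfolding linf_iff by blast
    have "cmod (a * f x) \<le> cmod a * M" for x
    proof -
      have "cmod (a * f x) = cmod a * cmod (f x)" by (rule norm_mult)
      also have "\<dots> \<le> cmod a * M" by (rule mult_left_mono[OF M norm_ge_zero])
      finally show ?thesis .
    qed
    thus ?thesis unfolding linf_iff by (intro exI[of _ "cmod a * M"] allI)
  qed
  have cnj: "(\<lambda>x. cnj (f x)) \<in> linf" if "f \<in> linf" for f :: "'a \<Rightarrow> complex"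
    using that unfolding linf_iff by simp
  have zero: "(\<lambda>_. 0) \<in> linf" unfolding linf_iff by (intro exI[of _ 0]) simp
  show ?thesis unfolding cstar_subalgebra_def
  proof (intro conjI)
    show "\<forall>f\<in>(linf :: ('a \<Rightarrow> complex) set). \<forall>g\<in>linf. (\<lambda>x. f x + g x) \<in> linf \<and> (\<lambda>x. f x * g x) \<in> linf"
    proof (intro ballI)
      fix f g :: "'a \<Rightarrow> complex" assume "f \<in> linf" "g \<in> linf"
      then show "(\<lambda>x. f x + g x) \<in> linf \<and> (\<lambda>x. f x * g x) \<in> linf" using add mult by blast
    qed
    show "\<forall>a. \<forall>f\<in>(linf :: ('a \<Rightarrow> complex) set). (\<lambda>x. a * f x) \<in> linf"
    proof (intro allI ballI)
      fix a and f :: "'a \<Rightarrow> complex" assume "f \<in> linf"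
      then show "(\<lambda>x. a * f x) \<in> linf" by (rule scale)
    qed
    show "\<forall>f\<in>(linf :: ('a \<Rightarrow> complex) set). (\<lambda>x. cnj (f x)) \<in> linf"
    proof
      fix f :: "'a \<Rightarrow> complex" assume "f \<in> linf"
      then show "(\<lambda>x. cnj (f x)) \<in> linf" by (rule cnj)
    qed
  qed (use zero in auto)
qed

context wgraph begin

lemma Aplus_family: "linf \<in> {S. cstar_subalgebra S \<and> Aalg b c \<subseteq> S \<and> (\<lambda>_. 1) \<in> S}"
proof -
  have "Aalg b c \<subseteq> linf" by (auto simp: Aalg_def)
  moreover have "(\<lambda>_. 1) \<in> linf" by (auto simp: linf_iff)
  ultimately show ?thesis using cstar_linf by blast
qed

lemma Aplus_sub: "Aplus b c \<subseteq> linf"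
  unfolding Aplus_def using Aplus_family by blast

lemma Aplus_one: "(\<lambda>_. 1) \<in> Aplus b c" unfolding Aplus_def by blast
lemma Aalg_Aplus: "Aalg b c \<subseteq> Aplus b c" unfolding Aplus_def by blast

lemma Aplus_add: "f \<in> Aplus b c \<Longrightarrow> g \<in> Aplus b c \<Longrightarrow> (\<lambda>x. f x + g x) \<in> Aplus b c"
  unfolding Aplus_def cstar_subalgebra_def by blast
lemma Aplus_mult: "f \<in> Aplus b c \<Longrightarrow> g \<in> Aplus b c \<Longrightarrow> (\<lambda>x. f x * g x) \<in> Aplus b c"
  unfolding Aplus_def cstar_subalgebra_def by blast
lemma Aplus_scale: "f \<in> Aplus b c \<Longrightarrow> (\<lambda>x. a * f x) \<in> Aplus b c"
  unfolding Aplus_def cstar_subalgebra_def by blast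
lemma Aplus_closed:
  assumes "g \<in> linf" "\<And>\<epsilon>. \<epsilon> > 0 \<Longrightarrow> \<exists>f\<in>Aplus b c. \<forall>x. cmod (g x - f x) \<le> \<epsilon>"
  shows "g \<in> Aplus b c"
  unfolding Aplus_def
proof
  fix S assume S: "S \<in> {S. cstar_subalgebra S \<and> Aalg b c \<subseteq> S \<and> (\<lambda>_. 1) \<in> S}"
  have sub: "Aplus b c \<subseteq> S" unfolding Aplus_def using S by blast
  have "\<forall>\<epsilon>>0. \<exists>f\<in>S. \<forall>x. cmod (g x - f x) \<le> \<epsilon>" using assms(2) sub by blast
  then show "g \<in> S" using S assms(1) unfolding cstar_subalgebra_def by blast
qed

lemma Aplus_zero: "(\<lambda>_. 0) \<in> Aplus b c" using Aplus_scale[OF Aplus_one, of 0] by simp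

lemma Aplus_pow: "f \<in> Aplus b c \<Longrightarrow> (\<lambda>x. f x ^ k) \<in> Aplus b c"
proof (induction k)
  case 0 thus ?case using Aplus_one by simp
next
  case (Suc k) thus ?case using Aplus_mult[of f "\<lambda>x. f x ^ k"] by simp
qed

lemma Aplus_geomsum: "f \<in> Aplus b c \<Longrightarrow> (\<lambda>x. \<Sum>k<N. f x ^ k) \<in> Aplus b c"
proof (induction N)
  case 0 thus ?case using Aplus_zero by simp
next
  case (Suc N) thus ?case using Aplus_add[of "\<lambda>x. \<Sum>k<N. f x ^ k" "\<lambda>x. f x ^ N"] Aplus_pow by simp
qed

lemma char_add: "\<gamma> \<in> characters b c \<Longrightarrow> f \<in> Aplus b c \<Longrightarrow> g \<in> Aplus b c \<Longrightarrow> \<gamma> (\<lambda>x. f x + g x) = \<gamma> f + \<gamma> g"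
  by (simp add: characters_def)
lemma char_mult: "\<gamma> \<in> characters b c \<Longrightarrow> f \<in> Aplus b c \<Longrightarrow> g \<in> Aplus b c \<Longrightarrow> \<gamma> (\<lambda>x. f x * g x) = \<gamma> f * \<gamma> g"
  by (simp add: characters_def)
lemma char_scale: "\<gamma> \<in> characters b c \<Longrightarrow> f \<in> Aplus b c \<Longrightarrow> \<gamma> (\<lambda>x. a * f x) = a * \<gamma> f"
  by (simp add: characters_def)

lemma char_one: assumes g: "\<gamma> \<in> characters b c" shows "\<gamma> (\<lambda>_. 1) = 1"
proof -
  obtain f where f: "f \<in> Aplus b c" "\<gamma> f \<noteq> 0" using g by (auto simp: characters_def)
  have "\<gamma> (\<lambda>x. f x * 1) = \<gamma> f * \<gamma> (\<lambda>_. 1)" by (rule char_mult[OF g f(1) Aplus_one])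
  hence "\<gamma> f = \<gamma> f * \<gamma> (\<lambda>_. 1)" by simp
  thus ?thesis using f(2) by simp
qed

lemma char_bound:
  assumes g: "\<gamma> \<in> characters b c" and f: "f \<in> Aplus b c" and M: "\<And>x. cmod (f x) \<le> M"
  shows "cmod (\<gamma> f) \<le> M"
proof (rule ccontr)
  assume "\<not> cmod (\<gamma> f) \<le> M"
  hence lM: "M < cmod (\<gamma> f)" by simp
  define l where "l = \<gamma> f"
  have M0: "0 \<le> M" using M[of undefined] norm_ge_zero order_trans by blast
  have l0: "l \<noteq> 0" using lM M0 by (auto simp: l_def)
  define r where "r x = (1/l) * f x" for x
  have rA: "r \<in> Aplus b c" unfolding r_def by (rule Aplus_scale[OF f])
  define q where "q = M / cmod l"
  have q0: "0 \<le> q" and q1: "q < 1" using M0 lM l0 by (auto simp: q_def l_def)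
  have rq: "cmod (r x) \<le> q" for x
    using M[of x] l0 by (simp add: r_def q_def norm_mult norm_divide divide_right_mono)
  have r1: "r x \<noteq> 1" for x using rq[of x] q1 by auto
  have d: "1 - q \<le> cmod (1 - r x)" for x
    using norm_triangle_ineq2[of 1 "r x"] rq[of x] by (simp add: norm_minus_commute)
  define s where "s x = 1 / (1 - r x)" for x
  have sb: "cmod (s x) \<le> 1 / (1 - q)" for x
    using d[of x] q1 by (simp add: s_def norm_divide frac_le)
  have sA: "s \<in> Aplus b c"
  proof (rule Aplus_closed)
    show "s \<in> linf" using sb linf_iff by blast
    fix \<epsilon> :: real assume e: "\<epsilon> > 0"
    obtain N where N: "q^N < \<epsilon> * (1 - q)" using real_arch_pow_inv[of "\<epsilon> * (1-q)" q] e q1 by auto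
    show "\<exists>f\<in>Aplus b c. \<forall>x. cmod (s x - f x) \<le> \<epsilon>"
    proof (intro bexI[OF _ Aplus_geomsum[OF rA, of N]] allI)
      fix x
      have "s x - (\<Sum>k<N. r x ^ k) = r x ^ N / (1 - r x)"
        using r1[of x] by (simp add: s_def sum_gp_strict field_simps)
      hence "cmod (s x - (\<Sum>k<N. r x ^ k)) = cmod (r x) ^ N / cmod (1 - r x)"
        by (simp add: norm_divide norm_power)
      also have "\<dots> \<le> q ^ N / (1 - q)"
        using rq[of x] d[of x] q1 q0 by (intro frac_le power_mono) auto
      also have "\<dots> \<le> \<epsilon>" using N q1 by (simp add: field_simps)
      finally show "cmod (s x - (\<Sum>k<N. r x ^ k)) \<le> \<epsilon>" .
    qed
  qed
  define h where "h x = 1 + (-1) * r x" for x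
  have hA: "h \<in> Aplus b c" unfolding h_def by (rule Aplus_add[OF Aplus_one Aplus_scale[OF rA]])
  have h1: "\<gamma> h = \<gamma> (\<lambda>_. 1) + \<gamma> (\<lambda>x. (-1) * r x)"
    unfolding h_def by (rule char_add[OF g Aplus_one Aplus_scale[OF rA]])
  have h2: "\<gamma> (\<lambda>x. (-1) * r x) = (-1) * \<gamma> r" by (rule char_scale[OF g rA])
  have h3: "\<gamma> r = (1/l) * \<gamma> f" unfolding r_def by (rule char_scale[OF g f])
  have h0: "\<gamma> h = 0" using h1 h2 h3 char_one[OF g] l0 by (simp add: l_def)
  have "(\<lambda>x. h x * s x) = (\<lambda>_. 1)"
    using r1 by (auto simp: fun_eq_iff h_def s_def field_simps)
  hence "\<gamma> (\<lambda>_. 1) = \<gamma> h * \<gamma> s" using char_mult[OF g hA sA] by simp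
  thus False using h0 char_one[OF g] by simp
qed

end

context fgraph begin

lemma Dt_Aplus: "u \<in> Dt b c \<Longrightarrow> u \<in> Aplus b c"
proof -
  assume u: "u \<in> Dt b c"
  have ul: "u \<in> linf" using u cc by (auto simp: canonically_compactifiable_def)
  have "u \<in> Aalg b c" using u ul by (auto simp: Aalg_def intro!: bexI[of _ u])
  thus ?thesis using Aalg_Aplus by blast
qed

lemma delta_Aplus: "delta z \<in> Aplus b c" by (rule Dt_Aplus[OF delta_Dt])

lemma boundary_delta:
  assumes g: "\<gamma> \<in> boundary b c" shows "\<gamma> (delta z) = 0"
proof (rule ccontr)
  assume ne: "\<gamma> (delta z) \<noteq> 0"
  have gc: "\<gamma> \<in> characters b c" using g by (simp add: boundary_def)
  have "(\<lambda>x. delta z x * delta z x) = delta z" by (auto simp: fun_eq_iff delta_def)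
  moreover have "\<gamma> (\<lambda>x. delta z x * delta z x) = \<gamma> (delta z) * \<gamma> (delta z)"
    by (rule char_mult[OF gc delta_Aplus delta_Aplus])
  ultimately have "\<gamma> (delta z) = \<gamma> (delta z) * \<gamma> (delta z)" by simp
  hence one: "\<gamma> (delta z) = 1" using ne by (metis mult_cancel_left1)
  have "\<gamma> = point_char b c z"
  proof
    fix f
    show "\<gamma> f = point_char b c z f"
    proof (cases "f \<in> Aplus b c")
      case True
      have eqf: "(\<lambda>x. f x * delta z x) = (\<lambda>x. f z * delta z x)" by (auto simp: fun_eq_iff delta_def)
      have "\<gamma> f * \<gamma> (delta z) = \<gamma> (\<lambda>x. f x * delta z x)"
        by (rule char_mult[OF gc True delta_Aplus, symmetric])
      also have "\<dots> = \<gamma> (\<lambda>x. f z * delta z x)" by (simp only: eqf)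
      also have "\<dots> = f z * \<gamma> (delta z)" by (rule char_scale[OF gc delta_Aplus])
      finally have "\<gamma> f * \<gamma> (delta z) = f z * \<gamma> (delta z)" .
      thus ?thesis using one True by (simp add: point_char_def)
    next
      case False
      thus ?thesis using gc by (simp add: point_char_def characters_def)
    qed
  qed
  thus False using g by (simp add: boundary_def)
qed

lemma sum_delta_Aplus: "finite F \<Longrightarrow> (\<lambda>y. \<Sum>z\<in>F. k z * delta z y) \<in> Aplus b c"
  by (rule Dt_Aplus[OF sum_delta_Dt])

lemma boundary_sum_delta:
  assumes g: "\<gamma> \<in> boundary b c"
  shows "finite F \<Longrightarrow> \<gamma> (\<lambda>y. \<Sum>z\<in>F. k z * delta z y) = 0"
proof (induction F rule: finite_induct)
  have gc: "\<gamma> \<in> characters b c" using g by (simp add: boundary_def)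
  {
    case empty
    have "\<gamma> (\<lambda>x. 0 * delta undefined x) = 0 * \<gamma> (delta undefined)"
      by (rule char_scale[OF gc delta_Aplus])
    thus ?case by simp
  next
    case (insert a F)
    have "\<gamma> (\<lambda>y. (\<lambda>y. k a * delta a y) y + (\<lambda>y. \<Sum>z\<in>F. k z * delta z y) y)
        = \<gamma> (\<lambda>y. k a * delta a y) + \<gamma> (\<lambda>y. \<Sum>z\<in>F. k z * delta z y)"
      by (rule char_add[OF gc Aplus_scale[OF delta_Aplus] sum_delta_Aplus[OF insert(1)]])
    also have "\<dots> = 0" using char_scale[OF gc delta_Aplus] boundary_delta[OF g] insert(3) by simp
    finally show ?case using insert by simp
  }
qed

lemma c0_vanish:
  assumes u: "u \<in> Dt b c" "c0 u" and g: "\<gamma> \<in> boundary b c"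
  shows "\<gamma> u = 0"
proof -
  have gc: "\<gamma> \<in> characters b c" using g by (simp add: boundary_def)
  have uA: "u \<in> Aplus b c" by (rule Dt_Aplus[OF u(1)])
  have "cmod (\<gamma> u) \<le> \<epsilon>" if e: "\<epsilon> > 0" for \<epsilon>
  proof -
    define F where "F = {x. \<epsilon> \<le> cmod (u x)}"
    have F: "finite F" using u(2) e by (simp add: c0_def F_def)
    define \<phi> where "\<phi> = (\<lambda>y. \<Sum>z\<in>F. u z * delta z y)"
    have \<phi>A: "\<phi> \<in> Aplus b c" unfolding \<phi>_def by (rule sum_delta_Aplus[OF F])
    have \<phi>0: "\<gamma> \<phi> = 0" unfolding \<phi>_def by (rule boundary_sum_delta[OF g F])
    have \<phi>x: "\<phi> x = (if x \<in> F then u x else 0)" for x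
    proof -
      have "\<phi> x = (\<Sum>z\<in>F. if x = z then u z else 0)"
        unfolding \<phi>_def by (rule sum.cong) (auto simp: delta_def)
      also have "\<dots> = (if x \<in> F then u x else 0)" using F by (simp add: sum.delta')
      finally show ?thesis .
    qed
    define \<psi> where "\<psi> = (\<lambda>x. u x + (-1) * \<phi> x)"
    have \<psi>A: "\<psi> \<in> Aplus b c" unfolding \<psi>_def by (rule Aplus_add[OF uA Aplus_scale[OF \<phi>A]])
    have "\<gamma> \<psi> = \<gamma> u + \<gamma> (\<lambda>x. (-1) * \<phi> x)" unfolding \<psi>_def
      by (rule char_add[OF gc uA Aplus_scale[OF \<phi>A]])
    also have "\<gamma> (\<lambda>x. (-1) * \<phi> x) = (-1) * \<gamma> \<phi>" by (rule char_scale[OF gc \<phi>A])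
    finally have "\<gamma> \<psi> = \<gamma> u" using \<phi>0 by simp
    moreover have "cmod (\<psi> x) \<le> \<epsilon>" for x
      using e by (cases "x \<in> F") (auto simp: \<psi>_def \<phi>x F_def)
    ultimately show ?thesis using char_bound[OF gc \<psi>A] by metis
  qed
  hence "cmod (\<gamma> u) \<le> 0"
    by (metis dual_order.antisym field_lbound_gt_zero less_eq_real_def norm_ge_zero not_less)
  thus ?thesis by simp
qed

end


locale ultraF =
  fixes F :: "'a filter"
  assumes proper: "F \<noteq> bot"
  assumes ultra: "eventually P F \<or> eventually (\<lambda>x. \<not> P x) F"

lemma extend_filter': "frequently P F \<Longrightarrow> inf F (principal {x. P x}) \<noteq> bot"
  by (simp add: trivial_limit_def eventually_inf_principal not_eventually)

lemma max_filter_ultraF: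
  assumes "F \<noteq> bot"
  assumes max: "\<And>G. G \<noteq> bot \<Longrightarrow> G \<le> F \<Longrightarrow> F = G"
  shows "ultraF F"
proof
  show "eventually P F \<or> (\<forall>\<^sub>Fx in F. \<not> P x)" for P
  proof (rule disjCI)
    assume "\<not> (\<forall>\<^sub>Fx in F. \<not> P x)"
    then have "inf F (principal {x. P x}) \<noteq> bot"
      by (simp add: not_eventually extend_filter')
    then have F: "F = inf F (principal {x. P x})"
      by (rule max) simp
    show "eventually P F"
      by (subst F) (simp add: eventually_inf_principal)
  qed
qed fact

lemma ex_max_ultraF:
  fixes F :: "'a filter"
  assumes F: "F \<noteq> bot"
  shows "\<exists>U\<le>F. ultraF U"
proof -
  let ?X = "{G. G \<noteq> bot \<and> G \<le> F}"
  let ?R = "{(b, a). a \<noteq> bot \<and> a \<le> b \<and> b \<le> F}"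

  have bot_notin_R: "c \<in> Chains ?R \<Longrightarrow> bot \<notin> c" for c
    by (auto simp: Chains_def)

  have [simp]: "Field ?R = ?X"
    by (auto simp: Field_def bot_unique)

  have "\<exists>m\<in>Field ?R. \<forall>a\<in>Field ?R. (m, a) \<in> ?R \<longrightarrow> a = m" (is "\<exists>m\<in>?A. ?B m")
  proof (rule Zorns_po_lemma)
    show "Partial_order ?R"
      by (auto simp: partial_order_on_def preorder_on_def
          antisym_def refl_on_def trans_def Field_def bot_unique)
    show "\<exists>u\<in>Field ?R. \<forall>a\<in>C. (a, u) \<in> ?R" if C: "C \<in> Chains ?R" for C
    proof (simp, intro exI conjI ballI)
      have Inf_C: "Inf C \<noteq> bot" "Inf C \<le> F" if "C \<noteq> {}"
      proof -
        from C that have "Inf C = bot \<longleftrightarrow> (\<exists>x\<in>C. x = bot)"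
          unfolding trivial_limit_def by (intro eventually_Inf_base) (auto simp: Chains_def)
        with C show "Inf C \<noteq> bot"
          by (simp add: bot_notin_R)
        from that obtain x where "x \<in> C" by auto
        with C show "Inf C \<le> F"
          by (auto intro!: Inf_lower2[of x] simp: Chains_def)
      qed
      then have [simp]: "inf F (Inf C) = (if C = {} then F else Inf C)"
        using C by (auto simp add: inf_absorb2)
      from C show "inf F (Inf C) \<noteq> bot"
        by (simp add: F Inf_C)
      from C show "inf F (Inf C) \<le> F"
        by (simp add: Chains_def Inf_C F)
      with C show "inf F (Inf C) \<le> x" "x \<le> F" if "x \<in> C" for x
        using that  by (auto intro: Inf_lower simp: Chains_def)
    qed
  qed
  then obtain U where U: "U \<in> ?A" "?B U" ..
  show ?thesis
  proof
    from U show "U \<le> F \<and> ultraF U"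
      by (auto intro!: max_filter_ultraF)
  qed
qed

lemma ultra_lim:
  fixes f :: "'a \<Rightarrow> complex"
  assumes U: "ultraF U" and M: "\<And>x. cmod (f x) \<le> M"
  shows "\<exists>l. (f \<longlongrightarrow> l) U"
proof -
  interpret ultraF U by fact
  let ?G = "filtermap f U"
  have Gb: "?G \<noteq> bot" using proper by (simp add: filtermap_bot_iff)
  have "eventually (\<lambda>z. z \<in> cball 0 M) ?G" by (simp add: eventually_filtermap M)
  then obtain l where l: "l \<in> cball 0 M" "inf (nhds l) ?G \<noteq> bot"
    using compact_filter[THEN iffD1, OF compact_cball] Gb by blast
  have "(f \<longlongrightarrow> l) U"
  proof (rule topological_tendstoI)
    fix S assume S: "open S" "l \<in> S"
    show "eventually (\<lambda>x. f x \<in> S) U"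
    proof (rule ccontr)
      assume "\<not> eventually (\<lambda>x. f x \<in> S) U"
      hence ev: "eventually (\<lambda>x. f x \<notin> S) U" using ultra by blast
      have "eventually (\<lambda>z. z \<in> S) (nhds l)" using S by (rule eventually_nhds_in_open)
      moreover have "eventually (\<lambda>z. z \<notin> S) ?G" using ev by (simp add: eventually_filtermap)
      ultimately have "eventually (\<lambda>z. False) (inf (nhds l) ?G)" unfolding eventually_inf by blast
      thus False using l(2) by (simp add: trivial_limit_def)
    qed
  qed
  thus ?thesis by blast
qed

context fgraph begin

lemma vanish_c0:
  assumes u: "u \<in> Dt b c" and van: "\<forall>\<gamma>\<in>boundary b c. gelfand_hat u \<gamma> = 0"
  shows "c0 u"
proof (rule ccontr)
  assume "\<not> c0 u"
  then obtain \<epsilon> where e: "\<epsilon> > 0" and inf: "infinite {x. \<epsilon> \<le> cmod (u x)}" by (auto simp: c0_def)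
  define S where "S = {x. \<epsilon> \<le> cmod (u x)}"
  define F0 where "F0 = inf cofinite (principal S)"
  have F0: "F0 \<noteq> bot"
  proof
    assume "F0 = bot"
    hence "eventually (\<lambda>x. False) F0" by simp
    hence "eventually (\<lambda>x. x \<in> S \<longrightarrow> False) cofinite" by (simp add: F0_def eventually_inf_principal)
    hence "finite S" by (simp add: eventually_cofinite)
    thus False using inf S_def by simp
  qed
  obtain U where U: "U \<le> F0" "ultraF U" using ex_max_ultraF[OF F0] by blast
  interpret ultraF U by (rule U(2))
  have Ub: "U \<noteq> bot" by (rule proper)
  have Ucof: "eventually P U" if "eventually P F0" for P using U(1) that by (rule filter_leD)
  have evS: "eventually (\<lambda>x. x \<in> S) U"
    by (rule Ucof) (simp add: F0_def eventually_inf_principal)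
  have evz: "eventually (\<lambda>x. x \<noteq> z) U" for z
  proof (rule Ucof)
    have "finite {x. \<not> (x \<in> S \<longrightarrow> x \<noteq> z)}" by (rule finite_subset[of _ "{z}"]) auto
    thus "eventually (\<lambda>x. x \<noteq> z) F0" by (simp add: F0_def eventually_inf_principal eventually_cofinite)
  qed
  define \<gamma> where "\<gamma> f = (if f \<in> Aplus b c then Lim U f else 0)" for f
  have lim: "(f \<longlongrightarrow> \<gamma> f) U" if fA: "f \<in> Aplus b c" for f
  proof -
    have "f \<in> linf" using fA Aplus_sub by blast
    then obtain M where "\<And>x. cmod (f x) \<le> M" unfolding linf_iff by blast
    then obtain l where l: "(f \<longlongrightarrow> l) U" using ultra_lim[OF U(2)] by blast
    have "Lim U f = l" by (rule tendsto_Lim[OF _ l]) (simp add: Ub)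
    thus ?thesis using l fA by (simp add: \<gamma>_def)
  qed
  have \<gamma>eq: "\<gamma> f = l" if fA: "f \<in> Aplus b c" and fl: "(f \<longlongrightarrow> l) U" for f l
    using tendsto_unique[OF Ub lim[OF fA] fl] .
  have h1: "\<forall>f\<in>Aplus b c. \<forall>g\<in>Aplus b c. \<gamma> (\<lambda>x. f x + g x) = \<gamma> f + \<gamma> g \<and> \<gamma> (\<lambda>x. f x * g x) = \<gamma> f * \<gamma> g"
  proof (intro ballI conjI)
    fix f g assume f: "f \<in> Aplus b c" and g: "g \<in> Aplus b c"
    show "\<gamma> (\<lambda>x. f x + g x) = \<gamma> f + \<gamma> g" by (rule \<gamma>eq[OF Aplus_add[OF f g] tendsto_add[OF lim[OF f] lim[OF g]]])
    show "\<gamma> (\<lambda>x. f x * g x) = \<gamma> f * \<gamma> g" by (rule \<gamma>eq[OF Aplus_mult[OF f g] tendsto_mult[OF lim[OF f] lim[OF g]]])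
  qed
  have h2: "\<forall>a. \<forall>f\<in>Aplus b c. \<gamma> (\<lambda>x. a * f x) = a * \<gamma> f"
  proof (intro allI ballI)
    fix a f assume f: "f \<in> Aplus b c"
    show "\<gamma> (\<lambda>x. a * f x) = a * \<gamma> f" by (rule \<gamma>eq[OF Aplus_scale[OF f] tendsto_mult[OF tendsto_const lim[OF f]]])
  qed
  have h3: "\<exists>f\<in>Aplus b c. \<gamma> f \<noteq> 0"
  proof
    show "\<gamma> (\<lambda>_. 1) \<noteq> 0" using \<gamma>eq[OF Aplus_one tendsto_const] by simp
  qed (rule Aplus_one)
  have h4: "\<forall>f. f \<notin> Aplus b c \<longrightarrow> \<gamma> f = 0" by (simp add: \<gamma>_def)
  have gc: "\<gamma> \<in> characters b c" unfolding characters_def mem_Collect_eq using h1 h2 h3 h4 by blast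
  have nb: "\<gamma> \<notin> range (point_char b c)"
  proof
    assume "\<gamma> \<in> range (point_char b c)"
    then obtain z where z: "\<gamma> = point_char b c z" by auto
    have "eventually (\<lambda>x. delta z x = 0) U" using evz[of z] by eventually_elim (simp add: delta_def)
    hence "(delta z \<longlongrightarrow> 0) U" by (rule tendsto_eventually)
    hence "\<gamma> (delta z) = 0" using \<gamma>eq[OF delta_Aplus] by blast
    moreover have "point_char b c z (delta z) = 1" using delta_Aplus by (simp add: point_char_def delta_def)
    ultimately show False using z by simp
  qed
  have gb: "\<gamma> \<in> boundary b c" using gc nb by (simp add: boundary_def)
  have "\<gamma> u = 0" using van gb by (simp add: gelfand_hat_def)
  moreover have "\<epsilon> \<le> cmod (\<gamma> u)"
  proof -
    have uA: "u \<in> Aplus b c" by (rule Dt_Aplus[OF u])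
    have t: "((\<lambda>x. cmod (u x)) \<longlongrightarrow> cmod (\<gamma> u)) U" by (rule tendsto_norm[OF lim[OF uA]])
    have ev: "eventually (\<lambda>x. \<epsilon> \<le> cmod (u x)) U" using evS by eventually_elim (simp add: S_def)
    show ?thesis by (rule tendsto_lowerbound[OF t ev]) (simp add: Ub)
  qed
  ultimately show False using e by simp
qed

lemma V_eq: "{u \<in> Dt b c. \<forall>\<gamma>\<in>boundary b c. gelfand_hat u \<gamma> = 0} = {u \<in> Dt b c. c0 u}"
  using vanish_c0 c0_vanish by (auto simp: gelfand_hat_def)

end


lemma infsum_diff':
  fixes f g :: "'a \<Rightarrow> complex"
  assumes "f summable_on A" "g summable_on A"
  shows "infsum (\<lambda>x. f x - g x) A = infsum f A - infsum g A"
proof -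
  have "infsum (\<lambda>x. f x + - g x) A = infsum f A + infsum (\<lambda>x. - g x) A"
    by (rule infsum_add[OF assms(1) summable_on_uminus[THEN iffD2, OF assms(2)]])
  thus ?thesis by (simp add: infsum_uminus)
qed

lemma summable_diff':
  fixes f g :: "'a \<Rightarrow> complex"
  assumes "f summable_on A" "g summable_on A"
  shows "(\<lambda>x. f x - g x) summable_on A"
  using summable_on_add[OF assms(1) summable_on_uminus[THEN iffD2, OF assms(2)]] by simp

lemma amgm_opt:
  fixes A B S :: real
  assumes A: "0 \<le> A" and B: "0 \<le> B" and H: "\<And>t. t > 0 \<Longrightarrow> S \<le> (t * A + B / t) / 2"
  shows "S \<le> sqrt A * sqrt B"
proof (cases "A > 0 \<and> B > 0")
  case True
  define t where "t = sqrt B / sqrt A"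
  have tp: "t > 0" using True by (simp add: t_def)
  have sA: "sqrt A * sqrt A = A" and sB: "sqrt B * sqrt B = B" using A B by simp_all
  have nA: "sqrt A \<noteq> 0" and nB: "sqrt B \<noteq> 0" using True by auto
  have "t * A = sqrt B / sqrt A * (sqrt A * sqrt A)" by (simp only: sA t_def)
  also have "\<dots> = sqrt A * sqrt B" using nA by (simp add: field_simps)
  finally have e1: "t * A = sqrt A * sqrt B" .
  have "B / t = (sqrt B * sqrt B) / (sqrt B / sqrt A)" by (simp only: sB t_def)
  also have "\<dots> = sqrt A * sqrt B" using nA nB by (simp add: field_simps)
  finally have e2: "B / t = sqrt A * sqrt B" .
  note e1 e2
  moreover
  ultimately show ?thesis using H[OF tp] by simp
next
  case False
  then have z: "A = 0 \<or> B = 0" using A B by auto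
  show ?thesis
  proof (rule ccontr)
    assume "\<not> ?thesis"
    then have Sp: "S > 0" using z by auto
    consider "A = 0" | "B = 0" using z by blast
    then show False
    proof cases
      case 1
      define t where "t = (B + 1) / S"
      have tp: "t > 0" using Sp B by (simp add: t_def)
      have eq: "(t * A + B / t) / 2 = B * S / (2 * (B + 1))" using 1 Sp B by (simp add: t_def field_simps)
      have "S \<le> B * S / (2 * (B + 1))" using H[OF tp] unfolding eq .
      also have "\<dots> < S"
      proof -
        have "0 \<le> B * S" using Sp B by simp
        hence "0 < B * S + S * 2" using Sp by linarith
        thus ?thesis using Sp B by (simp add: field_simps)
      qed
      finally show False by simp
    next
      case 2
      define t where "t = S / (A + 1)"
      have tp: "t > 0" using Sp A by (simp add: t_def)
      have eq: "(t * A + B / t) / 2 = S * A / (2 * (A + 1))" using 2 Sp A by (simp add: t_def field_simps)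
      have "S \<le> S * A / (2 * (A + 1))" using H[OF tp] unfolding eq .
      also have "\<dots> < S"
      proof -
        have "0 \<le> S * A" using Sp A by simp
        hence "0 < S * A + S * 2" "0 < A * S + S * 2" using Sp by (linarith, simp add: mult.commute)
        thus ?thesis using Sp A by (simp add: field_simps)
      qed
      finally show False by simp
    qed
  qed
qed

lemma gen_cs:
  fixes w :: "'i \<Rightarrow> real" and a h :: "'i \<Rightarrow> complex"
  assumes w: "\<And>i. 0 \<le> w i" and sa: "Sq w a summable_on UNIV" and sh: "Sq w h summable_on UNIV"
  shows "(\<lambda>i. complex_of_real (w i) * cnj (a i) * h i) summable_on UNIV"
    "cmod (infsum (\<lambda>i. complex_of_real (w i) * cnj (a i) * h i) UNIV)
       \<le> sqrt (infsum (Sq w a) UNIV) * sqrt (infsum (Sq w h) UNIV)"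
proof -
  define p where "p i = w i * cmod (a i) * cmod (h i)" for i
  have np: "cmod (complex_of_real (w i) * cnj (a i) * h i) = p i" for i
    using w[of i] by (simp add: p_def norm_mult)
  have amgm: "p i \<le> (t * Sq w a i + Sq w h i / t) / 2" if t: "t > 0" for i t
  proof -
    define X where "X = cmod (a i)"
    define Y where "Y = cmod (h i)"
    have "0 \<le> (t * X - Y)\<^sup>2 / t" using t by simp
    also have "(t * X - Y)\<^sup>2 / t = t * X\<^sup>2 - 2 * X * Y + Y\<^sup>2 / t"
      using t by (simp add: power2_eq_square field_simps)
    finally have "2 * X * Y \<le> t * X\<^sup>2 + Y\<^sup>2 / t" by simp
    hence "w i * (2 * X * Y) \<le> w i * (t * X\<^sup>2 + Y\<^sup>2 / t)" using w[of i] by (rule mult_left_mono)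
    thus ?thesis by (simp add: p_def Sq_def X_def Y_def algebra_simps)
  qed
  have sp: "p summable_on UNIV"
  proof (rule summable_on_comparison_test)
    have "(\<lambda>i. (Sq w a i + Sq w h i) * (1/2)) summable_on UNIV"
      by (intro summable_on_cmult_left summable_on_add sa sh)
    then show "(\<lambda>i. (1 * Sq w a i + Sq w h i / 1) / 2) summable_on UNIV" by simp
    show "p i \<le> (1 * Sq w a i + Sq w h i / 1) / 2" for i using amgm[of 1 i] by simp
    show "0 \<le> p i" for i using w[of i] by (simp add: p_def)
  qed
  show s: "(\<lambda>i. complex_of_real (w i) * cnj (a i) * h i) summable_on UNIV"
    unfolding summable_on_iff_abs_summable_on_complex np using sp .
  have "cmod (infsum (\<lambda>i. complex_of_real (w i) * cnj (a i) * h i) UNIV)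
      \<le> infsum (\<lambda>i. cmod (complex_of_real (w i) * cnj (a i) * h i)) UNIV"
    by (rule norm_infsum_bound) (simp add: np sp)
  also have "\<dots> = infsum p UNIV" by (simp add: np)
  also have "\<dots> \<le> sqrt (infsum (Sq w a) UNIV) * sqrt (infsum (Sq w h) UNIV)"
  proof (rule amgm_opt)
    show "0 \<le> infsum (Sq w a) UNIV" "0 \<le> infsum (Sq w h) UNIV" by (intro infsum_nonneg Sq_nonneg w)+
    fix t :: real assume t: "t > 0"
    have s2: "(\<lambda>i. (t * Sq w a i + Sq w h i / t) / 2) summable_on UNIV"
    proof -
      have "(\<lambda>i. t * Sq w a i + Sq w h i * (1/t)) summable_on UNIV"
        by (intro summable_on_add summable_on_cmult_right summable_on_cmult_left sa sh)
      then have "(\<lambda>i. (t * Sq w a i + Sq w h i * (1/t)) * (1/2)) summable_on UNIV"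
        by (rule summable_on_cmult_left)
      thus ?thesis by simp
    qed
    have "infsum p UNIV \<le> infsum (\<lambda>i. (t * Sq w a i + Sq w h i / t) / 2) UNIV"
      by (rule infsum_mono[OF sp s2]) (rule amgm[OF t])
    also have "\<dots> = (t * infsum (Sq w a) UNIV + infsum (Sq w h) UNIV / t) / 2"
    proof -
      have "infsum (\<lambda>i. (t * Sq w a i + Sq w h i * (1/t)) * (1/2)) UNIV
          = infsum (\<lambda>i. t * Sq w a i + Sq w h i * (1/t)) UNIV * (1/2)"
        by (rule infsum_cmult_left')
      also have "infsum (\<lambda>i. t * Sq w a i + Sq w h i * (1/t)) UNIV
          = infsum (\<lambda>i. t * Sq w a i) UNIV + infsum (\<lambda>i. Sq w h i * (1/t)) UNIV"
        by (intro infsum_add summable_on_cmult_right summable_on_cmult_left sa sh)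
      also have "infsum (\<lambda>i. t * Sq w a i) UNIV = t * infsum (Sq w a) UNIV" by (rule infsum_cmult_right')
      also have "infsum (\<lambda>i. Sq w h i * (1/t)) UNIV = infsum (Sq w h) UNIV * (1/t)" by (rule infsum_cmult_left')
      finally show ?thesis by simp
    qed
    finally show "infsum p UNIV \<le> (t * infsum (Sq w a) UNIV + infsum (Sq w h) UNIV / t) / 2" .
  qed
  finally show "cmod (infsum (\<lambda>i. complex_of_real (w i) * cnj (a i) * h i) UNIV)
       \<le> sqrt (infsum (Sq w a) UNIV) * sqrt (infsum (Sq w h) UNIV)" .
qed

lemma gen_lin:
  fixes w :: "'i \<Rightarrow> real" and a h1 h2 :: "'i \<Rightarrow> complex"
  assumes w: "\<And>i. 0 \<le> w i" and sa: "Sq w a summable_on UNIV"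
    and s1: "Sq w h1 summable_on UNIV" and s2: "Sq w h2 summable_on UNIV"
  shows "infsum (\<lambda>i. complex_of_real (w i) * cnj (a i) * h1 i) UNIV
       - infsum (\<lambda>i. complex_of_real (w i) * cnj (a i) * h2 i) UNIV
       = infsum (\<lambda>i. complex_of_real (w i) * cnj (a i) * (h1 i - h2 i)) UNIV"
proof -
  have "infsum (\<lambda>i. complex_of_real (w i) * cnj (a i) * (h1 i - h2 i)) UNIV
      = infsum (\<lambda>i. complex_of_real (w i) * cnj (a i) * h1 i - complex_of_real (w i) * cnj (a i) * h2 i) UNIV"
    by (simp add: algebra_simps)
  also have "\<dots> = infsum (\<lambda>i. complex_of_real (w i) * cnj (a i) * h1 i) UNIV
       - infsum (\<lambda>i. complex_of_real (w i) * cnj (a i) * h2 i) UNIV"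
    by (rule infsum_diff'[OF gen_cs(1)[OF w sa s1] gen_cs(1)[OF w sa s2]])
  finally show ?thesis by simp
qed



context fgraph begin

lemma Qform_eq: "Qform b c u v = 1/2 * infsum (\<lambda>i. complex_of_real (bw i) * cnj (df u i) * df v i) UNIV
    + infsum (\<lambda>x. complex_of_real (c x) * cnj (u x) * v x) UNIV"
proof -
  have "(\<lambda>(x,y). complex_of_real (b x y) * cnj (u x - u y) * (v x - v y))
      = (\<lambda>i. complex_of_real (bw i) * cnj (df u i) * df v i)"
    by (auto simp: fun_eq_iff bw_def df_def)
  thus ?thesis by (simp add: Qform_def)
qed

lemma inner_eq: "inner_m m w v = infsum (\<lambda>x. complex_of_real (m x) * cnj (w x) * v x) UNIV"
  unfolding inner_m_def by (rule infsum_cong) (simp add: algebra_simps)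

lemma Qform_bound:
  assumes u: "u \<in> Dt b c" and h: "h \<in> Dt b c"
  shows "cmod (Qform b c u h) \<le> 2 * sqrt (Qt b c u) * sqrt (Qt b c h)"
proof -
  have su: "Sq bw (df u) summable_on UNIV" "Sq c u summable_on UNIV" using u Dt_iff by auto
  have sh: "Sq bw (df h) summable_on UNIV" "Sq c h summable_on UNIV" using h Dt_iff by auto
  define P where "P = infsum (\<lambda>i. complex_of_real (bw i) * cnj (df u i) * df h i) UNIV"
  define C where "C = infsum (\<lambda>x. complex_of_real (c x) * cnj (u x) * h x) UNIV"
  have P: "cmod P \<le> sqrt (infsum (Sq bw (df u)) UNIV) * sqrt (infsum (Sq bw (df h)) UNIV)"
    unfolding P_def by (rule gen_cs(2)[OF bw_nn su(1) sh(1)])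
  have C: "cmod C \<le> sqrt (infsum (Sq c u) UNIV) * sqrt (infsum (Sq c h) UNIV)"
    unfolding C_def by (rule gen_cs(2)[OF c_nn su(2) sh(2)])
  have P2: "sqrt (infsum (Sq bw (df u)) UNIV) * sqrt (infsum (Sq bw (df h)) UNIV)
      \<le> sqrt (2 * Qt b c u) * sqrt (2 * Qt b c h)"
    by (rule mult_mono[OF real_sqrt_le_mono[OF E_le_Qt[OF u]] real_sqrt_le_mono[OF E_le_Qt[OF h]]]) (auto simp: Qt_nonneg intro!: infsum_nonneg Sq_nonneg bw_nn)
  also have "\<dots> = 2 * (sqrt (Qt b c u) * sqrt (Qt b c h))"
    by (simp add: real_sqrt_mult)
  finally have P3: "cmod P \<le> 2 * (sqrt (Qt b c u) * sqrt (Qt b c h))" using P by linarith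
  have C2: "sqrt (infsum (Sq c u) UNIV) * sqrt (infsum (Sq c h) UNIV) \<le> sqrt (Qt b c u) * sqrt (Qt b c h)"
    by (rule mult_mono[OF real_sqrt_le_mono[OF V_le_Qt[OF u]] real_sqrt_le_mono[OF V_le_Qt[OF h]]]) (auto simp: Qt_nonneg intro!: infsum_nonneg Sq_nonneg c_nn)
  have "cmod (Qform b c u h) = cmod (1/2 * P + C)" by (simp add: Qform_eq P_def C_def)
  also have "\<dots> \<le> cmod (1/2 * P) + cmod C" by (rule norm_triangle_ineq)
  also have "cmod (1/2 * P) = 1/2 * cmod P" by (simp add: norm_mult)
  finally show ?thesis using P3 C C2 by linarith
qed

lemma Qform_diff:
  assumes u: "u \<in> Dt b c" and v: "v \<in> Dt b c" and p: "\<phi> \<in> Dt b c"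
  shows "Qform b c u v - Qform b c u \<phi> = Qform b c u (\<lambda>x. v x - \<phi> x)"
proof -
  have su: "Sq bw (df u) summable_on UNIV" "Sq c u summable_on UNIV" using u Dt_iff by auto
  have sv: "Sq bw (df v) summable_on UNIV" "Sq c v summable_on UNIV" using v Dt_iff by auto
  have sp: "Sq bw (df \<phi>) summable_on UNIV" "Sq c \<phi> summable_on UNIV" using p Dt_iff by auto
  have d: "df (\<lambda>x. v x - \<phi> x) i = df v i - df \<phi> i" for i by (cases i) (simp add: df_def)
  note L1 = gen_lin[OF bw_nn su(1) sv(1) sp(1)]
  note L2 = gen_lin[OF c_nn su(2) sv(2) sp(2)]
  show ?thesis unfolding Qform_eq d using L1 L2 by (simp add: algebra_simps flip: L1 L2)
qed

lemma inner_bound: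
  assumes w: "w \<in> ell2 m" and h: "h \<in> ell2 m"
  shows "cmod (inner_m m w h) \<le> sqrt (l2norm_sq m w) * sqrt (l2norm_sq m h)"
  unfolding inner_eq l2_eq using gen_cs(2)[of m w h] m_nn w h by (simp add: ell2_iff)

lemma inner_diff:
  assumes w: "w \<in> ell2 m" and v: "v \<in> ell2 m" and p: "\<phi> \<in> ell2 m"
  shows "inner_m m w v - inner_m m w \<phi> = inner_m m w (\<lambda>x. v x - \<phi> x)"
  unfolding inner_eq using gen_lin[of m w v \<phi>] m_nn w v p by (simp add: ell2_iff)

lemma row_summable:
  assumes u: "u \<in> Dt b c"
  shows "(\<lambda>y. b x y * cmod (u x - u y)) summable_on UNIV"
proof -
  have "(\<lambda>(x,y). b x y * (cmod (u x - u y))\<^sup>2) summable_on UNIV" using u by (simp add: Dt_def Qt_finite_def)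
  hence "(\<lambda>(x,y). b x y * (cmod (u x - u y))\<^sup>2) summable_on Sigma UNIV (\<lambda>_. UNIV)" by simp
  hence r: "(\<lambda>y. b x y * (cmod (u x - u y))\<^sup>2) summable_on UNIV"
    by (rule summable_on_SigmaD1[where f = "\<lambda>x y. b x y * (cmod (u x - u y))\<^sup>2"]) simp
  have s: "(\<lambda>y. (b x y + b x y * (cmod (u x - u y))\<^sup>2) * (1/2)) summable_on UNIV"
    by (intro summable_on_cmult_left summable_on_add b_sum r)
  show ?thesis
  proof (rule summable_on_comparison_test[OF s])
    fix y
    have "cmod (u x - u y) \<le> (1 + (cmod (u x - u y))\<^sup>2) / 2"
    proof -
      have "0 \<le> (cmod (u x - u y) - 1)\<^sup>2" by simp
      thus ?thesis by (simp add: power2_eq_square algebra_simps)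
    qed
    hence "b x y * cmod (u x - u y) \<le> b x y * ((1 + (cmod (u x - u y))\<^sup>2) / 2)"
      using b_nn by (rule mult_left_mono) 
    thus "b x y * cmod (u x - u y) \<le> (b x y + b x y * (cmod (u x - u y))\<^sup>2) * (1/2)"
      by (simp add: algebra_simps)
    show "0 \<le> b x y * cmod (u x - u y)" using b_nn by simp
  qed
qed

lemma green:
  assumes u: "u \<in> Dt b c" and phi: "\<phi> \<in> Cc"
  shows "Qform b c u \<phi> = inner_m m (Lt b c m u) \<phi>"
proof -
  define F where "F = {x. \<phi> x \<noteq> 0}"
  have F: "finite F" using phi by (simp add: Cc_def F_def)
  have F0: "\<phi> x = 0" if "x \<notin> F" for x using that by (simp add: F_def)
  define R where "R x = infsum (\<lambda>y. complex_of_real (b x y) * (u x - u y)) UNIV" for x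
  define T1 where "T1 = (\<lambda>(x,y). complex_of_real (b x y) * cnj (u x - u y) * \<phi> x)"
  define T2 where "T2 = (\<lambda>(x,y). complex_of_real (b x y) * cnj (u x - u y) * \<phi> y)"
  have T1s: "T1 summable_on UNIV"
  proof -
    have "(\<lambda>i. cmod (T1 i)) summable_on (UNIV \<times> UNIV)"
    proof (rule summable_on_SigmaI[where g = "\<lambda>x. cmod (\<phi> x) * infsum (\<lambda>y. b x y * cmod (u x - u y)) UNIV"])
      fix x
      have e: "(\<lambda>y. cmod (T1 (x, y))) = (\<lambda>y. cmod (\<phi> x) * (b x y * cmod (u x - u y)))"
        by (auto simp: fun_eq_iff T1_def norm_mult b_nn complex_cnj_diff[symmetric] simp del: complex_cnj_diff)
      show "((\<lambda>y. cmod (T1 (x, y))) has_sum cmod (\<phi> x) * infsum (\<lambda>y. b x y * cmod (u x - u y)) UNIV) UNIV"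
        unfolding e by (rule has_sum_cmult_right[OF has_sum_infsum[OF row_summable[OF u]]])
    next
      show "(\<lambda>x. cmod (\<phi> x) * infsum (\<lambda>y. b x y * cmod (u x - u y)) UNIV) summable_on UNIV"
        by (rule finite_nonzero_values_imp_summable_on, rule finite_subset[OF _ F]) (auto simp: F_def)
    next
      fix x y show "0 \<le> cmod (T1 (x, y))" by simp
    qed
    thus ?thesis by (simp add: summable_on_iff_abs_summable_on_complex)
  qed
  have T1sum: "infsum T1 UNIV = infsum (\<lambda>x. cnj (R x) * \<phi> x) UNIV"
  proof -
    have "infsum (\<lambda>x. infsum (\<lambda>y. T1 (x,y)) UNIV) UNIV = infsum T1 (Sigma UNIV (\<lambda>_. UNIV))"
      by (rule infsum_Sigma_banach) (use T1s in simp)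
    moreover have "infsum (\<lambda>y. T1 (x,y)) UNIV = cnj (R x) * \<phi> x" for x
    proof -
      have "infsum (\<lambda>y. T1 (x,y)) UNIV = infsum (\<lambda>y. cnj (complex_of_real (b x y) * (u x - u y)) * \<phi> x) UNIV"
        by (simp add: T1_def)
      also have "\<dots> = infsum (\<lambda>y. cnj (complex_of_real (b x y) * (u x - u y))) UNIV * \<phi> x"
        by (rule infsum_cmult_left')
      also have "\<dots> = cnj (R x) * \<phi> x" unfolding R_def by (simp only: infsum_cnj)
      finally show ?thesis .
    qed
    ultimately show ?thesis by simp
  qed
  have T2eq: "T2 = (\<lambda>i. - T1 (prod.swap i))"
    by (auto simp: fun_eq_iff T1_def T2_def b_sym algebra_simps)
  have T1swap_s: "(\<lambda>i. T1 (prod.swap i)) summable_on UNIV"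
    using summable_on_reindex_bij_betw[OF bij_swap, of T1] T1s by simp
  have T1swap: "infsum (\<lambda>i. T1 (prod.swap i)) UNIV = infsum T1 UNIV"
    by (rule infsum_reindex_bij_betw[OF bij_swap])
  have T2s: "T2 summable_on UNIV" unfolding T2eq using T1swap_s by (simp add: summable_on_uminus)
  have T2sum: "infsum T2 UNIV = - infsum T1 UNIV" unfolding T2eq using T1swap by (simp add: infsum_uminus)
  have P: "infsum (\<lambda>i. complex_of_real (bw i) * cnj (df u i) * df \<phi> i) UNIV = 2 * infsum T1 UNIV"
  proof -
    have "(\<lambda>i. complex_of_real (bw i) * cnj (df u i) * df \<phi> i) = (\<lambda>i. T1 i - T2 i)"
      by (auto simp: fun_eq_iff bw_def df_def T1_def T2_def algebra_simps)
    hence "infsum (\<lambda>i. complex_of_real (bw i) * cnj (df u i) * df \<phi> i) UNIV = infsum T1 UNIV - infsum T2 UNIV"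
      using infsum_diff'[OF T1s T2s] by simp
    thus ?thesis using T2sum by simp
  qed
  have Lx: "complex_of_real (m x) * cnj (Lt b c m u x) = cnj (R x) + complex_of_real (c x) * cnj (u x)" for x
  proof -
    have mx: "m x \<noteq> 0" using m_pos by (metis less_irrefl)
    have "Lt b c m u x = complex_of_real (1 / m x) * (R x + complex_of_real (c x) * u x)"
      by (simp add: Lt_def R_def)
    hence "cnj (Lt b c m u x) = complex_of_real (1 / m x) * (cnj (R x) + complex_of_real (c x) * cnj (u x))"
      by simp
    thus ?thesis using mx by (simp add: of_real_divide field_simps)
  qed
  have s1: "(\<lambda>x. cnj (R x) * \<phi> x) summable_on UNIV"
    by (rule finite_nonzero_values_imp_summable_on, rule finite_subset[OF _ F]) (auto simp: F_def)
  have s2: "(\<lambda>x. complex_of_real (c x) * cnj (u x) * \<phi> x) summable_on UNIV"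
    by (rule finite_nonzero_values_imp_summable_on, rule finite_subset[OF _ F]) (auto simp: F_def)
  have "inner_m m (Lt b c m u) \<phi> = infsum (\<lambda>x. cnj (R x) * \<phi> x + complex_of_real (c x) * cnj (u x) * \<phi> x) UNIV"
    unfolding inner_eq by (rule infsum_cong) (simp add: Lx algebra_simps)
  also have "\<dots> = infsum (\<lambda>x. cnj (R x) * \<phi> x) UNIV + infsum (\<lambda>x. complex_of_real (c x) * cnj (u x) * \<phi> x) UNIV"
    by (rule infsum_add[OF s1 s2])
  also have "\<dots> = Qform b c u \<phi>" unfolding Qform_eq P T1sum by simp
  finally show ?thesis by simp
qed

lemma inner_delta: "inner_m m w (delta z) = complex_of_real (m z) * cnj (w z)"
proof -
  have "((\<lambda>x. complex_of_real (m x) * cnj (w x) * delta z x) has_sum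
      (\<Sum>x\<in>{z}. complex_of_real (m x) * cnj (w x) * delta z x)) UNIV"
    by (rule has_sum_finite_neutralI[where B="{z}"]) (auto simp: delta_def)
  hence "infsum (\<lambda>x. complex_of_real (m x) * cnj (w x) * delta z x) UNIV = complex_of_real (m z) * cnj (w z)"
    by (simp add: infsumI delta_def)
  thus ?thesis by (simp add: inner_eq)
qed

lemma Cc_DQD: "\<phi> \<in> Cc \<Longrightarrow> \<phi> \<in> DQD b c m"
proof -
  assume p: "\<phi> \<in> Cc"
  have D: "\<phi> \<in> Dt b c" by (rule Cc_Dt[OF p])
  have z: "\<phi> - \<phi> = (\<lambda>_. 0)" by (simp add: fun_eq_iff)
  have "Sq bw (df (\<lambda>_. 0)) = (\<lambda>_. 0)" by (auto simp: fun_eq_iff Sq_def df_def split: prod.splits)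
  moreover have "Sq c (\<lambda>_. 0) = (\<lambda>_. 0)" by (auto simp: fun_eq_iff Sq_def)
  ultimately have "Qt b c (\<lambda>_. 0) = 0" by (simp add: Qt_eq)
  moreover have "l2norm_sq m (\<lambda>_. 0) = 0" by (simp add: l2norm_sq_def)
  ultimately have zz: "Qt b c (\<phi> - \<phi>) + l2norm_sq m (\<phi> - \<phi>) = 0" unfolding z by simp
  show ?thesis unfolding DQD_def
  proof (intro CollectI conjI D Dt_ell2[OF D] allI impI)
    fix \<epsilon> :: real assume "\<epsilon> > 0"
    then show "\<exists>\<phi>'\<in>Cc. Qt b c (\<phi> - \<phi>') + l2norm_sq m (\<phi> - \<phi>') < \<epsilon>"
      using zz p by (intro bexI[of _ \<phi>]) auto
  qed
qed

lemma LD_rel_Lt: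
  assumes r: "LD_rel b c m u w" shows "w = Lt b c m u"
proof
  fix z
  have uD: "u \<in> Dt b c" using r by (simp add: LD_rel_def DQD_def)
  have dz: "delta z \<in> DQD b c m" by (rule Cc_DQD) (auto simp: Cc_def delta_def intro: finite_subset[of _ "{z}"])
  have "Qform b c u (delta z) = inner_m m w (delta z)" using r dz by (simp add: LD_rel_def)
  moreover have "Qform b c u (delta z) = inner_m m (Lt b c m u) (delta z)"
    by (rule green[OF uD]) (auto simp: Cc_def delta_def intro: finite_subset[of _ "{z}"])
  ultimately have e: "complex_of_real (m z) * cnj (w z) = complex_of_real (m z) * cnj (Lt b c m u z)"
    by (metis inner_delta)
  have mz: "complex_of_real (m z) \<noteq> 0" using m_pos by (metis less_irrefl of_real_eq_0_iff)
  have "cnj (w z) = cnj (Lt b c m u z)" using mult_left_cancel[OF mz] e by blast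
  thus "w z = Lt b c m u z" by simp
qed

lemma LD_rel_intro:
  assumes u: "u \<in> DQD b c m" and L: "Lt b c m u \<in> ell2 m"
  shows "LD_rel b c m u (Lt b c m u)"
  unfolding LD_rel_def
proof (intro conjI ballI u L)
  fix v assume v: "v \<in> DQD b c m"
  define w where "w = Lt b c m u"
  have uD: "u \<in> Dt b c" using u by (simp add: DQD_def)
  have vD: "v \<in> Dt b c" "v \<in> ell2 m" using v by (auto simp: DQD_def)
  have w2: "w \<in> ell2 m" using L by (simp add: w_def)
  define D where "D = Qform b c u v - inner_m m w v"
  define K where "K = 2 * sqrt (Qt b c u) + sqrt (l2norm_sq m w)"
  have l2w: "0 \<le> l2norm_sq m w" unfolding l2_eq by (intro infsum_nonneg Sq_nonneg m_nn)
  hence K0: "0 \<le> K" unfolding K_def using Qt_nonneg[of u] by simp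
  have bd: "cmod D \<le> K * sqrt \<delta>" if dp: "\<delta> > 0" for \<delta>
  proof -
    obtain \<phi> where \<phi>: "\<phi> \<in> Cc" "Qt b c (v - \<phi>) + l2norm_sq m (v - \<phi>) < \<delta>"
      using v dp unfolding DQD_def by blast
    have pD: "\<phi> \<in> Dt b c" by (rule Cc_Dt[OF \<phi>(1)])
    have p2: "\<phi> \<in> ell2 m" by (rule Dt_ell2[OF pD])
    define h where "h = (\<lambda>x. v x - \<phi> x)"
    have hD: "h \<in> Dt b c" unfolding h_def by (rule Dt_diff(1)[OF vD(1) pD])
    have h2: "h \<in> ell2 m" by (rule Dt_ell2[OF hD])
    have vh: "v - \<phi> = h" by (simp add: h_def fun_eq_iff)
    have l2h: "0 \<le> l2norm_sq m h" unfolding l2_eq by (intro infsum_nonneg Sq_nonneg m_nn)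
    have Qh: "Qt b c h \<le> \<delta>" using \<phi>(2) l2h unfolding vh by linarith
    have Lh: "l2norm_sq m h \<le> \<delta>" using \<phi>(2) Qt_nonneg[of h] unfolding vh by linarith
    have G: "Qform b c u \<phi> = inner_m m w \<phi>" unfolding w_def by (rule green[OF uD \<phi>(1)])
    have "D = (Qform b c u v - Qform b c u \<phi>) - (inner_m m w v - inner_m m w \<phi>)"
      unfolding D_def using G by simp
    also have "\<dots> = Qform b c u h - inner_m m w h"
      unfolding h_def by (simp add: Qform_diff[OF uD vD(1) pD] inner_diff[OF w2 vD(2) p2])
    finally have "cmod D \<le> cmod (Qform b c u h) + cmod (inner_m m w h)"
      using norm_triangle_ineq4 by metis
    also have "\<dots> \<le> 2 * sqrt (Qt b c u) * sqrt (Qt b c h) + sqrt (l2norm_sq m w) * sqrt (l2norm_sq m h)"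
      by (intro add_mono Qform_bound[OF uD hD] inner_bound[OF w2 h2])
    also have "\<dots> \<le> 2 * sqrt (Qt b c u) * sqrt \<delta> + sqrt (l2norm_sq m w) * sqrt \<delta>"
      by (intro add_mono mult_left_mono real_sqrt_le_mono Qh Lh) (auto simp: Qt_nonneg l2w)
    also have "\<dots> = K * sqrt \<delta>" by (simp add: K_def algebra_simps)
    finally show ?thesis .
  qed
  have "D = 0"
  proof (rule ccontr)
    assume "D \<noteq> 0"
    then have Dp: "cmod D > 0" by simp
    define \<delta> where "\<delta> = (cmod D / (K + 1))\<^sup>2"
    have dp: "\<delta> > 0" using Dp K0 by (simp add: \<delta>_def)
    have "sqrt \<delta> = cmod D / (K + 1)" using Dp K0 by (simp add: \<delta>_def)
    hence "cmod D \<le> K * (cmod D / (K + 1))" using bd[OF dp] by simp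
    also have "\<dots> < cmod D" using Dp K0 by (simp add: field_simps)
    finally show False by simp
  qed
  thus "Qform b c u v = inner_m m (Lt b c m u) v" by (simp add: D_def w_def)
qed

lemma main_fgraph:
  shows "DQD b c m = {u \<in> Dt b c. \<forall>\<gamma>\<in>boundary b c. gelfand_hat u \<gamma> = 0}
    \<and> {u \<in> Dt b c. \<forall>\<gamma>\<in>boundary b c. gelfand_hat u \<gamma> = 0} = Dt_o b c x0
    \<and> DLD b c m = {f \<in> Dt b c. (\<forall>\<gamma>\<in>boundary b c. gelfand_hat f \<gamma> = 0) \<and> Lt b c m f \<in> ell2 m}
    \<and> (\<forall>f\<in>DLD b c m. LD b c m f = Lt b c m f)"
proof -
  have A: "DQD b c m = {u \<in> Dt b c. \<forall>\<gamma>\<in>boundary b c. gelfand_hat u \<gamma> = 0}"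
    using DQD_eq V_eq by simp
  have B: "{u \<in> Dt b c. \<forall>\<gamma>\<in>boundary b c. gelfand_hat u \<gamma> = 0} = Dt_o b c x0"
    using Dto_eq[of x0] V_eq by simp
  have C: "DLD b c m = {f \<in> Dt b c. (\<forall>\<gamma>\<in>boundary b c. gelfand_hat f \<gamma> = 0) \<and> Lt b c m f \<in> ell2 m}"
  proof
    show "DLD b c m \<subseteq> {f \<in> Dt b c. (\<forall>\<gamma>\<in>boundary b c. gelfand_hat f \<gamma> = 0) \<and> Lt b c m f \<in> ell2 m}"
    proof
      fix f assume "f \<in> DLD b c m"
      then obtain w where r: "LD_rel b c m f w" by (auto simp: DLD_def)
      have "f \<in> DQD b c m" "w \<in> ell2 m" using r by (auto simp: LD_rel_def)
      moreover have "w = Lt b c m f" by (rule LD_rel_Lt[OF r])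
      ultimately show "f \<in> {f \<in> Dt b c. (\<forall>\<gamma>\<in>boundary b c. gelfand_hat f \<gamma> = 0) \<and> Lt b c m f \<in> ell2 m}"
        using A by auto
    qed
    show "{f \<in> Dt b c. (\<forall>\<gamma>\<in>boundary b c. gelfand_hat f \<gamma> = 0) \<and> Lt b c m f \<in> ell2 m} \<subseteq> DLD b c m"
    proof
      fix f assume f: "f \<in> {f \<in> Dt b c. (\<forall>\<gamma>\<in>boundary b c. gelfand_hat f \<gamma> = 0) \<and> Lt b c m f \<in> ell2 m}"
      then have "f \<in> DQD b c m" using A by auto
      then have "LD_rel b c m f (Lt b c m f)" using LD_rel_intro f by auto
      thus "f \<in> DLD b c m" by (auto simp: DLD_def)
    qed
  qed
  have D: "\<forall>f\<in>DLD b c m. LD b c m f = Lt b c m f"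
  proof
    fix f assume "f \<in> DLD b c m"
    then obtain w where r: "LD_rel b c m f w" by (auto simp: DLD_def)
    have r': "LD_rel b c m f (Lt b c m f)" using r LD_rel_Lt[OF r] by simp
    show "LD b c m f = Lt b c m f" unfolding LD_def
    proof (rule the_equality)
      show "LD_rel b c m f (Lt b c m f)" by (rule r')
      fix w' assume "LD_rel b c m f w'"
      then show "w' = Lt b c m f" by (rule LD_rel_Lt)
    qed
  qed
  show ?thesis using A B C D by blast
qed

end

theorem mainTheorem15:
  fixes b :: "'x::countable \<Rightarrow> 'x \<Rightarrow> real" and c :: "'x \<Rightarrow> real"
    and m :: "'x \<Rightarrow> real" and x0 :: 'x
  assumes "infinite (UNIV :: 'x set)"
    and "weighted_graph b c"
    and "connected_graph b"
    and "canonically_compactifiable b c"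
    and "\<forall>x. 0 < m x"
    and "m summable_on UNIV"
  shows "DQD b c m = {u \<in> Dt b c. \<forall>\<gamma>\<in>boundary b c. gelfand_hat u \<gamma> = 0}
    \<and> {u \<in> Dt b c. \<forall>\<gamma>\<in>boundary b c. gelfand_hat u \<gamma> = 0} = Dt_o b c x0
    \<and> DLD b c m = {f \<in> Dt b c. (\<forall>\<gamma>\<in>boundary b c. gelfand_hat f \<gamma> = 0) \<and> Lt b c m f \<in> ell2 m}
    \<and> (\<forall>f\<in>DLD b c m. LD b c m f = Lt b c m f)"
proof -
  interpret fgraph b c m
    by unfold_locales (use assms in auto)
  show ?thesis by (rule main_fgraph)
qed


end
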